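(* Assume the following setting. $S$ is a finite semigroup with anti-involution $*$, $R$ a commutative ring with $1$, $\alpha$ a twisting from $S$ into $R$ with $\alpha(x,y)=\alpha(y^*,x^* )$; for each $\mathcal D$-class $D$ there is an idempotent $1_D\in D$ with $1_D^*=1_D$; $L_D$ is the $\mathcal L$-class of $1_D$, $L_D^*=\{x^*\mid x\in L_D\}$, $G_D=L_D\cap L_D^*$; for each $D$ there is $\beta_D:L_D\times L_D^*\to G(R)$ with $\beta_D(x,y)\beta_D(xy,z)=\beta_D(x,yz)\beta_D(y,z)$, $\alpha(x,y)\beta_D(xy,z)=\alpha(x,yz)\beta_D(y,z)$ and $\beta_D(x,y)=\beta_D(y^*,x^* )$ whenever all occurring values of $\beta_D$ have arguments in $L_D\times L_D^*$; and $R^{\beta_D}[G_D]$ is cellular with cell datum $(\Lambda_D,M_D,C,* )$. Let $R^\alpha[S]$ have the cell datum $(\Lambda,M,C,* )$ where $\Lambda=\{(D,\lambda)\}$ with $(D_1,\lambda_1)\le(D_2,\lambda_2)$ iff $D_1<_{\mathcal D}D_2$ or ($D_1=D_2$, $\lambda_1\le\lambda_2$), $M(D,\lambda)=\mathcal L_D\times M_D(\lambda)$ ($\mathcal L_D$ the set of $\mathcal L$-classes in $D$), $u_L\in L$ with $u_L\,\mathcal R\,1_D$ chosen for each $L\in\mathcal L_D$, and $C^{(D,\lambda)}_{(L,s)(K,t)}=\sum_{g\in G_D}c^\lambda_{st}(g)\beta_D(u_L^*,g)\beta_D(u_L^*g,u_K)(u_L^*gu_K)$ where $C^\lambda_{st}=\sum_g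 c^\lambda_{st}(g)g$. Define the twisted sandwich matrix $P_D^\alpha\in\mathrm{Mat}_{\mathcal L_D}(R^{\beta_D}[G_D])$ by $(P_D^\alpha)_{LK}=0$ if $u_Lu_K^*<_{\mathcal D}D$ and $(P_D^\alpha)_{LK}=\alpha(u_L,u_K^* )\,u_Lu_K^*$ if $u_Lu_K^*\in G_D$ (one of these always holds). Then for all $(D,\lambda)\in\Lambda$ and $(L,s),(K,t)\in M(D,\lambda)$, \[\phi^{(D,\lambda)}\big(C_{(L,s)},C_{(K,t)}\big)=\phi^\lambda_{(P_D^\alpha)_{LK}}(C_s,C_t),\] where the left side is the form for the cellular algebra $R^\alpha[S]$ and the right side is the form for the cellular algebra $R^{\beta_D}[G_D]$.
   Context: Green's relations ($S^1$ = $S$ with identity adjoined): $x\le_{\mathcal R}y$ iff $x\in yS^1$, $x\le_{\mathcal L}y$ iff $x\in S^1y$, $x\le_{\mathcal J}y$ iff $x\in S^1yS^1$; $\mathcal R,\mathcal L,\mathcal J$ associated equivalences; $\mathcal H=\mathcal R\cap\mathcal L$; $\mathcal D$ generated by $\mathcal R\cup\mathcal L$; for finite $S$, $\mathcal D=\mathcal J$ and $<_{\mathcal D}$ is the strict order on $\mathcal D$-classes induced by $\le_{\mathcal J}$ ($x<_{\mathcal D}D$ means the class of $x$ is strictly below $D$). Anti-involution of $S$: $(x^* )^*=x$, $(xy)^*=y^*x^*$; it and $*|_{G_D}$ extend linearly to anti-involutions of the algebras. A twisting satisfies $\alpha(x,y)\alpha(xy,z)=\alpha(x,yz)\alpha(y,z)$;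 $R^\alpha[S]$ has basis $S$ and product $x\cdot y=\alpha(x,y)(xy)$; $R^{\beta_D}[G_D]$ likewise with $\beta_D$. Cellular algebra $A$ with cell datum $(\Lambda,M,C,* )$: $\Lambda$ a finite poset, $\{C^\lambda_{st}: s,t\in M(\lambda)\}$ an $R$-basis, $(C^\lambda_{st})^*=C^\lambda_{ts}$, and for $a\in A$ there are $r_a(s',s)\in R$ with $aC^\lambda_{st}\in\sum_{s'}r_a(s',s)C^\lambda_{s't}+A(<\lambda)$ for all $t$, where $A(<\lambda)=\mathrm{span}\{C^\mu_{uv}:\mu<\lambda\}$. Cell module $W(\lambda)$: free $R$-module on $\{C_s: s\in M(\lambda)\}$. For $a\in A$, the bilinear form $\phi^\lambda_a$ on $W(\lambda)$ is defined on basis elements by: $\phi^\lambda_a(C_s,C_t)$ is the unique element of $R$ with $C^\lambda_{s's}\,a\,C^\lambda_{tt'}\in\phi^\lambda_a(C_s,C_t)C^\lambda_{s't'}+A(<\lambda)$ for all $s',t'\in M(\lambda)$; and $\phi^\lambda=\phi^\lambda_1$ (here $\phi^\lambda(C_s,C_t)$ is likewise the unique scalar with $C^\lambda_{s's}C^\lambda_{tt'}\in\phi^\lambda(C_s,C_t)C^\lambda_{s't'}+A(<\lambda)$). *)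

theory Defs
  imports Main "HOL-Library.Function_Algebras"
begin

definition smul :: "'r::comm_ring_1 \<Rightarrow> ('b \<Rightarrow> 'r) \<Rightarrow> ('b \<Rightarrow> 'r)" where
  "smul c f = (\<lambda>x. c * f x)"

definition alg_carrier :: "'b set \<Rightarrow> ('b \<Rightarrow> 'r::zero) set" where
  "alg_carrier B = {f. \<forall>x. x \<notin> B \<longrightarrow> f x = 0}"

definition basis_elt :: "'b \<Rightarrow> 'b \<Rightarrow> 'r::{zero,one}" where
  "basis_elt x = (\<lambda>z. if z = x then 1 else 0)"

text \<open>Product of R^alpha[B]: x . y = alpha(x,y) (xy), extended bilinearly.\<close>
definition tw_mult :: "'b set \<Rightarrow> ('b \<Rightarrow> 'b \<Rightarrow> 'b) \<Rightarrow> ('b \<Rightarrow> 'b \<Rightarrow> 'r::comm_ring_1)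
    \<Rightarrow> ('b \<Rightarrow> 'r) \<Rightarrow> ('b \<Rightarrow> 'r) \<Rightarrow> ('b \<Rightarrow> 'r)" where
  "tw_mult B m al f g = (\<lambda>z. \<Sum>x\<in>B. \<Sum>y\<in>B. if m x y = z then al x y * f x * g y else 0)"

text \<open>Linear extension of an involution st: (sum f(x) x)^* = sum f(x) x^*.\<close>
definition alg_star :: "('b \<Rightarrow> 'b) \<Rightarrow> ('b \<Rightarrow> 'r) \<Rightarrow> ('b \<Rightarrow> 'r)" where
  "alg_star st f = (\<lambda>z. f (st z))"

definition cell_span :: "'i set \<Rightarrow> ('i \<Rightarrow> ('b \<Rightarrow> 'r::comm_ring_1)) \<Rightarrow> ('b \<Rightarrow> 'r) set" where
  "cell_span I v = {f. \<exists>c. f = (\<Sum>i\<in>I. smul (c i) (v i))}"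

definition cell_idx :: "'l set \<Rightarrow> ('l \<Rightarrow> 'm set) \<Rightarrow> ('l \<times> 'm \<times> 'm) set" where
  "cell_idx Lam M = {(lam, s, t). lam \<in> Lam \<and> s \<in> M lam \<and> t \<in> M lam}"

definition lower_ideal :: "'l set \<Rightarrow> ('l \<Rightarrow> 'l \<Rightarrow> bool) \<Rightarrow> ('l \<Rightarrow> 'm set)
    \<Rightarrow> ('l \<Rightarrow> 'm \<Rightarrow> 'm \<Rightarrow> ('b \<Rightarrow> 'r::comm_ring_1)) \<Rightarrow> 'l \<Rightarrow> ('b \<Rightarrow> 'r) set" where
  "lower_ideal Lam le M C lam =
     cell_span {(mu, u, w). mu \<in> Lam \<and> le mu lam \<and> mu \<noteq> lam \<and> u \<in> M mu \<and> w \<in> M mu}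
               (\<lambda>(mu, u, w). C mu u w)"

definition cellular :: "'b set \<Rightarrow> (('b \<Rightarrow> 'r) \<Rightarrow> ('b \<Rightarrow> 'r) \<Rightarrow> ('b \<Rightarrow> 'r))
    \<Rightarrow> (('b \<Rightarrow> 'r) \<Rightarrow> ('b \<Rightarrow> 'r)) \<Rightarrow> 'l set \<Rightarrow> ('l \<Rightarrow> 'l \<Rightarrow> bool) \<Rightarrow> ('l \<Rightarrow> 'm set)
    \<Rightarrow> ('l \<Rightarrow> 'm \<Rightarrow> 'm \<Rightarrow> ('b \<Rightarrow> 'r::comm_ring_1)) \<Rightarrow> bool" where
  "cellular B mul st Lam le M C \<longleftrightarrow>
     finite Lam \<and>
     (\<forall>x\<in>Lam. le x x) \<and>
     (\<forall>x\<in>Lam. \<forall>y\<in>Lam. le x y \<and> le y x \<longrightarrow> x = y) \<and>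
     (\<forall>x\<in>Lam. \<forall>y\<in>Lam. \<forall>z\<in>Lam. le x y \<and> le y z \<longrightarrow> le x z) \<and>
     (\<forall>lam\<in>Lam. finite (M lam)) \<and>
     \<comment> \<open>the C^lam_st form an R-basis of A\<close>
     (\<forall>(lam, s, t)\<in>cell_idx Lam M. C lam s t \<in> alg_carrier B) \<and>
     alg_carrier B \<subseteq> cell_span (cell_idx Lam M) (\<lambda>(lam, s, t). C lam s t) \<and>
     (\<forall>c. (\<Sum>(lam, s, t)\<in>cell_idx Lam M. smul (c (lam, s, t)) (C lam s t)) = 0
          \<longrightarrow> (\<forall>i\<in>cell_idx Lam M. c i = 0)) \<and>
     \<comment> \<open>st is an R-linear anti-involution of A\<close>
     (\<forall>f\<in>alg_carrier B. st f \<in> alg_carrier B \<and> st (st f) = f) \<and>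
     (\<forall>c. \<forall>f\<in>alg_carrier B. \<forall>g\<in>alg_carrier B. st (smul c f + g) = smul c (st f) + st g) \<and>
     (\<forall>f\<in>alg_carrier B. \<forall>g\<in>alg_carrier B. st (mul f g) = mul (st g) (st f)) \<and>
     (\<forall>lam\<in>Lam. \<forall>s\<in>M lam. \<forall>t\<in>M lam. st (C lam s t) = C lam t s) \<and>
     \<comment> \<open>multiplication rule\<close>
     (\<forall>a\<in>alg_carrier B. \<forall>lam\<in>Lam. \<forall>s\<in>M lam. \<exists>r. \<forall>t\<in>M lam.
        \<exists>g\<in>lower_ideal Lam le M C lam.
          mul a (C lam s t) = (\<Sum>s'\<in>M lam. smul (r s') (C lam s' t)) + g)"

definition cell_form :: "(('b \<Rightarrow> 'r) \<Rightarrow> ('b \<Rightarrow> 'r) \<Rightarrow> ('b \<Rightarrow> 'r)) \<Rightarrow> 'l set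
    \<Rightarrow> ('l \<Rightarrow> 'l \<Rightarrow> bool) \<Rightarrow> ('l \<Rightarrow> 'm set) \<Rightarrow> ('l \<Rightarrow> 'm \<Rightarrow> 'm \<Rightarrow> ('b \<Rightarrow> 'r::comm_ring_1))
    \<Rightarrow> 'l \<Rightarrow> 'm \<Rightarrow> 'm \<Rightarrow> 'r" where
  "cell_form mul Lam le M C lam s t =
     (THE r. \<forall>s'\<in>M lam. \<forall>t'\<in>M lam. \<exists>g\<in>lower_ideal Lam le M C lam.
        mul (C lam s' s) (C lam t t') = smul r (C lam s' t') + g)"

definition cell_form_a :: "(('b \<Rightarrow> 'r) \<Rightarrow> ('b \<Rightarrow> 'r) \<Rightarrow> ('b \<Rightarrow> 'r)) \<Rightarrow> 'l set
    \<Rightarrow> ('l \<Rightarrow> 'l \<Rightarrow> bool) \<Rightarrow> ('l \<Rightarrow> 'm set) \<Rightarrow> ('l \<Rightarrow> 'm \<Rightarrow> 'm \<Rightarrow> ('b \<Rightarrow> 'r::comm_ring_1))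
    \<Rightarrow> 'l \<Rightarrow> ('b \<Rightarrow> 'r) \<Rightarrow> 'm \<Rightarrow> 'm \<Rightarrow> 'r" where
  "cell_form_a mul Lam le M C lam a s t =
     (THE r. \<forall>s'\<in>M lam. \<forall>t'\<in>M lam. \<exists>g\<in>lower_ideal Lam le M C lam.
        mul (mul (C lam s' s) a) (C lam t t') = smul r (C lam s' t') + g)"

definition semigroup_on :: "'s set \<Rightarrow> ('s \<Rightarrow> 's \<Rightarrow> 's) \<Rightarrow> bool" where
  "semigroup_on S m \<longleftrightarrow> (\<forall>x\<in>S. \<forall>y\<in>S. m x y \<in> S) \<and>
     (\<forall>x\<in>S. \<forall>y\<in>S. \<forall>z\<in>S. m (m x y) z = m x (m y z))"

definition anti_involution_on :: "'s set \<Rightarrow> ('s \<Rightarrow> 's \<Rightarrow> 's) \<Rightarrow> ('s \<Rightarrow> 's) \<Rightarrow> bool" where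
  "anti_involution_on S m st \<longleftrightarrow> (\<forall>x\<in>S. st x \<in> S \<and> st (st x) = x) \<and>
     (\<forall>x\<in>S. \<forall>y\<in>S. st (m x y) = m (st y) (st x))"

definition twisting :: "'s set \<Rightarrow> ('s \<Rightarrow> 's \<Rightarrow> 's) \<Rightarrow> ('s \<Rightarrow> 's \<Rightarrow> 'r::comm_ring_1) \<Rightarrow> bool" where
  "twisting S m al \<longleftrightarrow>
     (\<forall>x\<in>S. \<forall>y\<in>S. \<forall>z\<in>S. al x y * al (m x y) z = al x (m y z) * al y z)"

text \<open>x \<le>R y iff x in y S^1; x \<le>L y iff x in S^1 y; x \<le>J y iff x in S^1 y S^1.\<close>
definition Rle :: "'s set \<Rightarrow> ('s \<Rightarrow> 's \<Rightarrow> 's) \<Rightarrow> 's \<Rightarrow> 's \<Rightarrow> bool" where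
  "Rle S m x y \<longleftrightarrow> x = y \<or> (\<exists>t\<in>S. x = m y t)"

definition Lle :: "'s set \<Rightarrow> ('s \<Rightarrow> 's \<Rightarrow> 's) \<Rightarrow> 's \<Rightarrow> 's \<Rightarrow> bool" where
  "Lle S m x y \<longleftrightarrow> x = y \<or> (\<exists>s\<in>S. x = m s y)"

definition Jle :: "'s set \<Rightarrow> ('s \<Rightarrow> 's \<Rightarrow> 's) \<Rightarrow> 's \<Rightarrow> 's \<Rightarrow> bool" where
  "Jle S m x y \<longleftrightarrow> x = y \<or> (\<exists>s\<in>S. x = m s y) \<or> (\<exists>t\<in>S. x = m y t)
      \<or> (\<exists>s\<in>S. \<exists>t\<in>S. x = m (m s y) t)"

definition Rrel :: "'s set \<Rightarrow> ('s \<Rightarrow> 's \<Rightarrow> 's) \<Rightarrow> 's \<Rightarrow> 's \<Rightarrow> bool" where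
  "Rrel S m x y \<longleftrightarrow> Rle S m x y \<and> Rle S m y x"

definition Lrel :: "'s set \<Rightarrow> ('s \<Rightarrow> 's \<Rightarrow> 's) \<Rightarrow> 's \<Rightarrow> 's \<Rightarrow> bool" where
  "Lrel S m x y \<longleftrightarrow> Lle S m x y \<and> Lle S m y x"

definition Drel :: "'s set \<Rightarrow> ('s \<Rightarrow> 's \<Rightarrow> 's) \<Rightarrow> 's \<Rightarrow> 's \<Rightarrow> bool" where
  "Drel S m x y \<longleftrightarrow>
     (x, y) \<in> {(a, b). a \<in> S \<and> b \<in> S \<and> (Rrel S m a b \<or> Lrel S m a b)}\<^sup>*"

definition Dclass :: "'s set \<Rightarrow> ('s \<Rightarrow> 's \<Rightarrow> 's) \<Rightarrow> 's \<Rightarrow> 's set" where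
  "Dclass S m x = {y \<in> S. Drel S m x y}"

definition Dclasses :: "'s set \<Rightarrow> ('s \<Rightarrow> 's \<Rightarrow> 's) \<Rightarrow> 's set set" where
  "Dclasses S m = Dclass S m ` S"

definition Lclass :: "'s set \<Rightarrow> ('s \<Rightarrow> 's \<Rightarrow> 's) \<Rightarrow> 's \<Rightarrow> 's set" where
  "Lclass S m x = {y \<in> S. Lrel S m x y}"

definition Lclasses_in :: "'s set \<Rightarrow> ('s \<Rightarrow> 's \<Rightarrow> 's) \<Rightarrow> 's set \<Rightarrow> 's set set" where
  "Lclasses_in S m D = Lclass S m ` D"

definition Dless :: "'s set \<Rightarrow> ('s \<Rightarrow> 's \<Rightarrow> 's) \<Rightarrow> 's set \<Rightarrow> 's set \<Rightarrow> bool" where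
  "Dless S m D1 D2 \<longleftrightarrow> (\<exists>x\<in>D1. \<exists>y\<in>D2. Jle S m x y \<and> \<not> Jle S m y x)"

definition below_D :: "'s set \<Rightarrow> ('s \<Rightarrow> 's \<Rightarrow> 's) \<Rightarrow> 's \<Rightarrow> 's set \<Rightarrow> bool" where
  "below_D S m x D \<longleftrightarrow> Dless S m (Dclass S m x) D"

definition LD :: "'s set \<Rightarrow> ('s \<Rightarrow> 's \<Rightarrow> 's) \<Rightarrow> ('s set \<Rightarrow> 's) \<Rightarrow> 's set \<Rightarrow> 's set" where
  "LD S m one D = Lclass S m (one D)"

definition GD :: "'s set \<Rightarrow> ('s \<Rightarrow> 's \<Rightarrow> 's) \<Rightarrow> ('s \<Rightarrow> 's) \<Rightarrow> ('s set \<Rightarrow> 's) \<Rightarrow> 's set \<Rightarrow> 's set" where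
  "GD S m st one D = LD S m one D \<inter> st ` LD S m one D"

definition inLL :: "'s set \<Rightarrow> ('s \<Rightarrow> 's \<Rightarrow> 's) \<Rightarrow> ('s \<Rightarrow> 's) \<Rightarrow> ('s set \<Rightarrow> 's) \<Rightarrow> 's set
    \<Rightarrow> 's \<Rightarrow> 's \<Rightarrow> bool" where
  "inLL S m st one D x y \<longleftrightarrow> x \<in> LD S m one D \<and> y \<in> st ` LD S m one D"

definition bigLam :: "'s set \<Rightarrow> ('s \<Rightarrow> 's \<Rightarrow> 's) \<Rightarrow> ('s set \<Rightarrow> 'l set) \<Rightarrow> ('s set \<times> 'l) set" where
  "bigLam S m LamD = Sigma (Dclasses S m) LamD"

definition bigle :: "'s set \<Rightarrow> ('s \<Rightarrow> 's \<Rightarrow> 's) \<Rightarrow> ('s set \<Rightarrow> 'l \<Rightarrow> 'l \<Rightarrow> bool)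
    \<Rightarrow> ('s set \<times> 'l) \<Rightarrow> ('s set \<times> 'l) \<Rightarrow> bool" where
  "bigle S m leD p q \<longleftrightarrow>
     Dless S m (fst p) (fst q) \<or> (fst p = fst q \<and> leD (fst p) (snd p) (snd q))"

definition bigM :: "'s set \<Rightarrow> ('s \<Rightarrow> 's \<Rightarrow> 's) \<Rightarrow> ('s set \<Rightarrow> 'l \<Rightarrow> 'm set)
    \<Rightarrow> ('s set \<times> 'l) \<Rightarrow> ('s set \<times> 'm) set" where
  "bigM S m MD p = Lclasses_in S m (fst p) \<times> MD (fst p) (snd p)"

definition bigC :: "'s set \<Rightarrow> ('s \<Rightarrow> 's \<Rightarrow> 's) \<Rightarrow> ('s \<Rightarrow> 's) \<Rightarrow> ('s set \<Rightarrow> 's)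
    \<Rightarrow> ('s set \<Rightarrow> 's \<Rightarrow> 's \<Rightarrow> 'r::comm_ring_1) \<Rightarrow> ('s set \<Rightarrow> 'l \<Rightarrow> 'm \<Rightarrow> 'm \<Rightarrow> ('s \<Rightarrow> 'r))
    \<Rightarrow> ('s set \<Rightarrow> 's) \<Rightarrow> ('s set \<times> 'l) \<Rightarrow> ('s set \<times> 'm) \<Rightarrow> ('s set \<times> 'm) \<Rightarrow> ('s \<Rightarrow> 'r)" where
  "bigC S m st one be CD u p Ls Kt =
     (\<lambda>z. \<Sum>g\<in>GD S m st one (fst p).
        if m (m (st (u (fst Ls))) g) (u (fst Kt)) = z
        then CD (fst p) (snd p) (snd Ls) (snd Kt) g * be (fst p) (st (u (fst Ls))) g
               * be (fst p) (m (st (u (fst Ls))) g) (u (fst Kt))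
        else 0)"

definition twP :: "'s set \<Rightarrow> ('s \<Rightarrow> 's \<Rightarrow> 's) \<Rightarrow> ('s \<Rightarrow> 's) \<Rightarrow> ('s set \<Rightarrow> 's)
    \<Rightarrow> ('s \<Rightarrow> 's \<Rightarrow> 'r::comm_ring_1) \<Rightarrow> ('s set \<Rightarrow> 's) \<Rightarrow> 's set \<Rightarrow> 's set \<Rightarrow> 's set \<Rightarrow> ('s \<Rightarrow> 'r)" where
  "twP S m st one al u D L K =
     (if m (u L) (st (u K)) \<in> GD S m st one D
      then smul (al (u L) (st (u K))) (basis_elt (m (u L) (st (u K))))
      else 0)"

end

theory Submission
  imports Defs
begin


locale sgi =
  fixes S :: "'s set" and m :: "'s \<Rightarrow> 's \<Rightarrow> 's" and st :: "'s \<Rightarrow> 's"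
  assumes sg: "semigroup_on S m" and inv: "anti_involution_on S m st" and finS: "finite S"
begin

lemma cl[simp,intro]: "x\<in>S \<Longrightarrow> y\<in>S \<Longrightarrow> m x y \<in> S"
  using sg unfolding semigroup_on_def by blast
lemma assoc: "x\<in>S \<Longrightarrow> y\<in>S \<Longrightarrow> z\<in>S \<Longrightarrow> m (m x y) z = m x (m y z)"
  using sg unfolding semigroup_on_def by blast
lemma stS[simp,intro]: "x\<in>S \<Longrightarrow> st x \<in> S"
  using inv unfolding anti_involution_on_def by blast
lemma stst[simp]: "x\<in>S \<Longrightarrow> st (st x) = x"
  using inv unfolding anti_involution_on_def by blast
lemma stm: "x\<in>S \<Longrightarrow> y\<in>S \<Longrightarrow> st (m x y) = m (st y) (st x)"
  using inv unfolding anti_involution_on_def by blast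

definition inL where "inL e x \<longleftrightarrow> x \<in> S \<and> m x e = x \<and> (\<exists>z\<in>S. m z x = e)"
definition inR where "inR e x \<longleftrightarrow> x \<in> S \<and> m e x = x \<and> (\<exists>z\<in>S. m x z = e)"

lemma Lclass_iff:
  assumes "e\<in>S" "m e e = e" shows "x \<in> Lclass S m e \<longleftrightarrow> inL e x"
proof
  assume "x \<in> Lclass S m e"
  then have x: "x\<in>S" "Lle S m e x" "Lle S m x e" unfolding Lclass_def Lrel_def by auto
  from x(3) have "m x e = x" using assms by (auto simp: Lle_def assoc)
  moreover have "\<exists>z\<in>S. m z x = e"
  proof -
    from x(2) consider "e = x" | s where "s\<in>S" "e = m s x" unfolding Lle_def by blast
    then show ?thesis using assms by cases auto
  qed
  ultimately show "inL e x" using x unfolding inL_def by blast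
next
  assume "inL e x"
  then obtain z where "x\<in>S" "m x e = x" "z\<in>S" "m z x = e" unfolding inL_def by blast
  then have "Lle S m e x" "Lle S m x e" unfolding Lle_def by force+
  then show "x \<in> Lclass S m e" unfolding Lclass_def Lrel_def using \<open>x\<in>S\<close> by blast
qed

lemma inR_iff:
  assumes "e\<in>S" "m e e = e" "st e = e" shows "y \<in> st ` Lclass S m e \<longleftrightarrow> inR e y"
proof
  assume "y \<in> st ` Lclass S m e"
  then obtain x where x: "x \<in> Lclass S m e" "y = st x" by auto
  then have "inL e x" using Lclass_iff assms by blast
  then obtain z where z: "x\<in>S" "m x e = x" "z\<in>S" "m z x = e" unfolding inL_def by blast
  have "m (st e) (st x) = st x" using stm[of x e] z assms by simp
  then have 1: "m e y = y" using x(2) assms by simp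
  have "m (st x) (st z) = st e" using stm[of z x] z by simp
  then have 2: "m y (st z) = e" using x(2) assms by simp
  show "inR e y" using z x 1 2 unfolding inR_def by auto
next
  assume "inR e y"
  then obtain z where z: "y\<in>S" "m e y = y" "z\<in>S" "m y z = e" unfolding inR_def by blast
  have 1: "m (st y) e = st y" using stm[of e y] z assms by simp
  have 2: "m (st z) (st y) = e" using stm[of y z] z assms by simp
  have "inL e (st y)" unfolding inL_def using z 1 2 by auto
  then have "st y \<in> Lclass S m e" using Lclass_iff assms by blast
  then show "y \<in> st ` Lclass S m e" using z by (metis image_eqI stst)
qed

lemma inL_m: assumes "inL e x" "inL e y" "inR e y" "e \<in> S" shows "inL e (m x y)"
proof -
  obtain z w where h: "x\<in>S" "m x e = x" "z\<in>S" "m z x = e" "y\<in>S" "m y e = y" "w\<in>S" "m w y = e" "m e y = y"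
    using assms unfolding inL_def inR_def by blast
  have 1: "m (m x y) e = m x y" using h(1,5,6) assms(4) by (simp add: assoc)
  have "m (m w z) (m x y) = m w (m (m z x) y)" using h(1,3,5,7) by (simp add: assoc)
  also have "\<dots> = e" by (simp only: h(4,9,8))
  finally have 2: "m (m w z) (m x y) = e" .
  have 3: "m w z \<in> S" "m x y \<in> S" using h(1,3,5,7) by auto
  show ?thesis unfolding inL_def using 1 2 3 by blast
qed

lemma inR_m: assumes "inR e x" "inL e x" "inR e y" "e \<in> S" shows "inR e (m x y)"
proof -
  obtain z w where h: "x\<in>S" "m e x = x" "z\<in>S" "m x z = e" "y\<in>S" "m e y = y" "w\<in>S" "m y w = e" "m x e = x"
    using assms unfolding inL_def inR_def by blast
  have 1: "m e (m x y) = m x y" using h(1,2,5) assms(4) by (simp flip: assoc)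
  have "m (m x y) (m w z) = m (m x (m y w)) z" using h(1,3,5,7) by (simp add: assoc)
  also have "\<dots> = e" by (simp only: h(8,9,4))
  finally have 2: "m (m x y) (m w z) = e" .
  have 3: "m w z \<in> S" "m x y \<in> S" using h(1,3,5,7) by auto
  show ?thesis unfolding inR_def using 1 2 3 by blast
qed

lemma H_inj:
  assumes "inL e a" "inR e b" "inL e g" "inR e g" "inL e g'" "inR e g'" "e\<in>S"
    and eq: "m (m a g) b = m (m a g') b"
  shows "g = g'"
proof -
  obtain z1 where z1: "z1\<in>S" "m z1 a = e" using assms unfolding inL_def by blast
  obtain z2 where z2: "z2\<in>S" "m b z2 = e" using assms unfolding inR_def by blast
  have S: "a\<in>S" "b\<in>S" "g\<in>S" "g'\<in>S" using assms unfolding inL_def inR_def by auto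
  have gg: "m e g = g" "m g e = g" "m e g' = g'" "m g' e = g'" using assms unfolding inL_def inR_def by auto
  have "m z1 (m (m (m a g) b) z2) = m (m (m z1 a) g) (m b z2)" using S z1(1) z2(1) by (simp add: assoc)
  also have "\<dots> = g" by (simp only: z1 z2 gg)
  finally have 1: "m z1 (m (m (m a g) b) z2) = g" .
  have "m z1 (m (m (m a g') b) z2) = m (m (m z1 a) g') (m b z2)" using S z1(1) z2(1) by (simp add: assoc)
  also have "\<dots> = g'" by (simp only: z1 z2 gg)
  finally have 2: "m z1 (m (m (m a g') b) z2) = g'" .
  have "g = m z1 (m (m (m a g) b) z2)" using 1 by (rule sym)
  also have "\<dots> = m z1 (m (m (m a g') b) z2)" by (simp only: eq)
  also have "\<dots> = g'" by (rule 2)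
  finally show ?thesis .
qed

lemma Rrel_inR: assumes "e\<in>S" "m e e = e" "x\<in>S" "Rrel S m x e" shows "inR e x"
proof -
  have a: "Rle S m x e" "Rle S m e x" using assms(4) unfolding Rrel_def by auto
  from a(1) consider "x = e" | t where "t\<in>S" "x = m e t" unfolding Rle_def by blast
  then have 1: "m e x = x" using assms by cases (auto simp flip: assoc)
  from a(2) consider "e = x" | t where "t\<in>S" "e = m x t" unfolding Rle_def by blast
  then have 2: "\<exists>z\<in>S. m x z = e" using assms by cases auto
  show ?thesis unfolding inR_def using 1 2 assms by blast
qed

lemma Lle_trans: assumes "x\<in>S" "y\<in>S" "z\<in>S" "Lle S m x y" "Lle S m y z" shows "Lle S m x z"
proof -
  from assms(4) consider "x = y" | s where "s\<in>S" "x = m s y" unfolding Lle_def by blast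
  then show ?thesis
  proof cases
    case 1 then show ?thesis using assms by simp
  next
    case (2 s)
    from assms(5) consider "y = z" | s' where "s'\<in>S" "y = m s' z" unfolding Lle_def by blast
    then show ?thesis
    proof cases
      case 1 then show ?thesis using 2 unfolding Lle_def by blast
    next
      case (2 s')
      then have "x = m (m s s') z" using \<open>x = m s y\<close> \<open>s\<in>S\<close> assms by (simp add: assoc)
      then show ?thesis unfolding Lle_def using 2 \<open>s\<in>S\<close> by blast
    qed
  qed
qed

lemma Rle_trans: assumes "x\<in>S" "y\<in>S" "z\<in>S" "Rle S m x y" "Rle S m y z" shows "Rle S m x z"
proof -
  from assms(4) consider "x = y" | s where "s\<in>S" "x = m y s" unfolding Rle_def by blast
  then show ?thesis
  proof cases
    case 1 then show ?thesis using assms by simp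
  next
    case (2 s)
    from assms(5) consider "y = z" | s' where "s'\<in>S" "y = m z s'" unfolding Rle_def by blast
    then show ?thesis
    proof cases
      case 1 then show ?thesis using 2 unfolding Rle_def by blast
    next
      case (2 s')
      then have "x = m z (m s' s)" using \<open>x = m y s\<close> \<open>s\<in>S\<close> assms by (simp add: assoc)
      then show ?thesis unfolding Rle_def using 2 \<open>s\<in>S\<close> by blast
    qed
  qed
qed

lemma Lrel_trans: "x\<in>S \<Longrightarrow> y\<in>S \<Longrightarrow> z\<in>S \<Longrightarrow> Lrel S m x y \<Longrightarrow> Lrel S m y z \<Longrightarrow> Lrel S m x z"
  unfolding Lrel_def using Lle_trans by blast
lemma Rrel_trans: "x\<in>S \<Longrightarrow> y\<in>S \<Longrightarrow> z\<in>S \<Longrightarrow> Rrel S m x y \<Longrightarrow> Rrel S m y z \<Longrightarrow> Rrel S m x z"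
  unfolding Rrel_def using Rle_trans by blast
lemma Lrel_sym: "Lrel S m x y \<Longrightarrow> Lrel S m y x" unfolding Lrel_def by blast
lemma Rrel_sym: "Rrel S m x y \<Longrightarrow> Rrel S m y x" unfolding Rrel_def by blast

lemma Lclass_eq: assumes "x\<in>S" "y\<in>S" "Lrel S m x y" shows "Lclass S m x = Lclass S m y"
  unfolding Lclass_def using Lrel_trans Lrel_sym assms by blast

lemma Lclass_mem: assumes "y \<in> Lclass S m x" "x \<in> S" shows "Lclass S m y = Lclass S m x"
proof -
  have "y \<in> S" "Lrel S m x y" using assms unfolding Lclass_def by auto
  then show ?thesis using Lclass_eq Lrel_sym assms by metis
qed

lemma st_Rle: assumes "x\<in>S" "y\<in>S" "Rle S m x y" shows "Lle S m (st x) (st y)"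
proof -
  from assms(3) consider "x = y" | s where "s\<in>S" "x = m y s" unfolding Rle_def by blast
  then show ?thesis
  proof cases
    case 1 then show ?thesis unfolding Lle_def by simp
  next
    case (2 s) then have "st x = m (st s) (st y)" using stm assms by simp
    then show ?thesis unfolding Lle_def using 2 by blast
  qed
qed

lemma st_Lle: assumes "x\<in>S" "y\<in>S" "Lle S m x y" shows "Rle S m (st x) (st y)"
proof -
  from assms(3) consider "x = y" | s where "s\<in>S" "x = m s y" unfolding Lle_def by blast
  then show ?thesis
  proof cases
    case 1 then show ?thesis unfolding Rle_def by simp
  next
    case (2 s) then have "st x = m (st y) (st s)" using stm assms by simp
    then show ?thesis unfolding Rle_def using 2 by blast
  qed
qed

lemma st_Rrel: "x\<in>S \<Longrightarrow> y\<in>S \<Longrightarrow> Rrel S m x y \<Longrightarrow> Lrel S m (st x) (st y)"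
  unfolding Rrel_def Lrel_def using st_Rle by blast
lemma st_Lrel: "x\<in>S \<Longrightarrow> y\<in>S \<Longrightarrow> Lrel S m x y \<Longrightarrow> Rrel S m (st x) (st y)"
  unfolding Rrel_def Lrel_def using st_Lle by blast

definition DR where "DR = {(a, b). a \<in> S \<and> b \<in> S \<and> (Rrel S m a b \<or> Lrel S m a b)}"

lemma Drel_DR: "Drel S m x y \<longleftrightarrow> (x,y) \<in> DR\<^sup>*" unfolding Drel_def DR_def by simp

lemma sym_DR: "sym DR" unfolding DR_def sym_def using Lrel_sym Rrel_sym by blast

lemma Drel_sym: "Drel S m x y \<Longrightarrow> Drel S m y x"
  unfolding Drel_DR by (meson sym_DR sym_rtrancl symD)
lemma Drel_trans: "Drel S m x y \<Longrightarrow> Drel S m y z \<Longrightarrow> Drel S m x z"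
  unfolding Drel_DR by simp
lemma Drel_refl: "Drel S m x x"
  unfolding Drel_DR by simp
lemma Drel_R: "x\<in>S \<Longrightarrow> y\<in>S \<Longrightarrow> Rrel S m x y \<Longrightarrow> Drel S m x y"
  unfolding Drel_DR DR_def by blast
lemma Drel_L: "x\<in>S \<Longrightarrow> y\<in>S \<Longrightarrow> Lrel S m x y \<Longrightarrow> Drel S m x y"
  unfolding Drel_DR DR_def by blast

lemma Drel_S: "Drel S m x y \<Longrightarrow> x \<noteq> y \<Longrightarrow> x \<in> S \<and> y \<in> S"
  unfolding Drel_DR
proof (induction rule: rtrancl_induct)
  case base then show ?case by simp
next
  case (step y z) then show ?case unfolding DR_def by auto
qed

lemma Drel_st: "Drel S m x y \<Longrightarrow> Drel S m (st x) (st y)"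
  unfolding Drel_DR
proof (induction rule: rtrancl_induct)
  case base then show ?case by simp
next
  case (step y z)
  then have "(st y, st z) \<in> DR" unfolding DR_def using st_Rrel st_Lrel by auto
  then show ?case using step by simp
qed

lemma Dclass_eq: "x \<in> Dclass S m y \<Longrightarrow> Dclass S m x = Dclass S m y"
  unfolding Dclass_def using Drel_sym Drel_trans by blast

lemma Dclasses_mem: "D \<in> Dclasses S m \<Longrightarrow> x \<in> D \<Longrightarrow> D = Dclass S m x"
  unfolding Dclasses_def using Dclass_eq by blast

lemma Dclass_self: "x\<in>S \<Longrightarrow> x \<in> Dclass S m x" unfolding Dclass_def using Drel_refl by blast

lemma Dclasses_sub: "D \<in> Dclasses S m \<Longrightarrow> D \<subseteq> S" unfolding Dclasses_def Dclass_def by auto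



lemma Jle_cases:
  assumes "Jle S m x y" "y \<in> S"
  obtains "x = y" | s where "s\<in>S" "x = m s y" | t where "t\<in>S" "x = m y t"
    | s t where "s\<in>S" "t\<in>S" "x = m (m s y) t"
  using assms unfolding Jle_def by blast

lemma Jle_trans: assumes "x\<in>S" "y\<in>S" "z\<in>S" "Jle S m x y" "Jle S m y z" shows "Jle S m x z"
proof -
  have J1: "x = z \<Longrightarrow> Jle S m x z" unfolding Jle_def by simp
  have J2: "s\<in>S \<Longrightarrow> x = m s z \<Longrightarrow> Jle S m x z" for s unfolding Jle_def by blast
  have J3: "t\<in>S \<Longrightarrow> x = m z t \<Longrightarrow> Jle S m x z" for t unfolding Jle_def by blast
  have J4: "s\<in>S \<Longrightarrow> t\<in>S \<Longrightarrow> x = m (m s z) t \<Longrightarrow> Jle S m x z" for s t unfolding Jle_def by blast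
  show ?thesis
  proof (cases rule: Jle_cases[OF assms(4) assms(2)])
    case 1 then show ?thesis using assms(5) by simp
  next
    case (2 s)
    show ?thesis
    proof (cases rule: Jle_cases[OF assms(5) assms(3)])
      case 1 then show ?thesis using 2 J2 by simp
    next
      case (2 s') then show ?thesis using \<open>s\<in>S\<close> \<open>x = m s y\<close> assms by (intro J2[of "m s s'"]) (auto simp: assoc)
    next
      case (3 t') then show ?thesis using \<open>s\<in>S\<close> \<open>x = m s y\<close> assms by (intro J4[of s t']) (auto simp: assoc)
    next
      case (4 s' t') then show ?thesis using \<open>s\<in>S\<close> \<open>x = m s y\<close> assms by (intro J4[of "m s s'" t']) (auto simp: assoc)
    qed
  next
    case (3 t)
    show ?thesis
    proof (cases rule: Jle_cases[OF assms(5) assms(3)])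
      case 1 then show ?thesis using 3 J3 by simp
    next
      case (2 s') then show ?thesis using \<open>t\<in>S\<close> \<open>x = m y t\<close> assms by (intro J4[of s' t]) (auto simp: assoc)
    next
      case (3 t') then show ?thesis using \<open>t\<in>S\<close> \<open>x = m y t\<close> assms by (intro J3[of "m t' t"]) (auto simp: assoc)
    next
      case (4 s' t') then show ?thesis using \<open>t\<in>S\<close> \<open>x = m y t\<close> assms by (intro J4[of s' "m t' t"]) (auto simp: assoc)
    qed
  next
    case (4 s t)
    note o = this
    show ?thesis
    proof (cases rule: Jle_cases[OF assms(5) assms(3)])
      case 1 then show ?thesis using o J4 by simp
    next
      case (2 s') then show ?thesis using o assms by (intro J4[of "m s s'" t]) (auto simp: assoc)
    next
      case (3 t') then show ?thesis using o assms by (intro J4[of s "m t' t"]) (auto simp: assoc)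
    next
      case (4 s' t') then show ?thesis using o assms by (intro J4[of "m s s'" "m t' t"]) (auto simp: assoc)
    qed
  qed
qed

lemma Drel_Jle: "Drel S m x y \<Longrightarrow> Jle S m x y"
  unfolding Drel_DR
proof (induction rule: rtrancl_induct)
  case base then show ?case by (simp add: Jle_def)
next
  case (step y z)
  then have yz: "y \<in> S" "z\<in>S" "Rrel S m y z \<or> Lrel S m y z" unfolding DR_def by auto
  have "Jle S m y z" using yz(3) unfolding Rrel_def Lrel_def Rle_def Lle_def Jle_def by blast
  show ?case
  proof (cases "x = y")
    case True then show ?thesis using \<open>Jle S m y z\<close> by simp
  next
    case False
    then have "x \<in> S" using step.hyps(1) Drel_S unfolding Drel_DR by blast
    then show ?thesis using Jle_trans step.IH yz \<open>Jle S m y z\<close> by blast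
  qed
qed

lemma Dless_irrefl: assumes "D \<in> Dclasses S m" shows "\<not> Dless S m D D"
proof
  assume "Dless S m D D"
  then obtain x y where xy: "x\<in>D" "y\<in>D" "\<not> Jle S m y x" unfolding Dless_def by blast
  have "D = Dclass S m x" using assms xy Dclasses_mem by blast
  then have "Drel S m x y" using xy unfolding Dclass_def by blast
  then have "Jle S m y x" using Drel_Jle Drel_sym by blast
  then show False using xy by blast
qed

lemma Jle_inv: assumes "Jle S m e z" "e \<in> S" "z\<in>S" "m e e = e"
  shows "\<exists>s\<in>S. \<exists>t\<in>S. e = m s (m z t)"
proof (cases rule: Jle_cases[OF assms(1) assms(3)])
  case 1 then show ?thesis using assms by (intro bexI[of _ z]) auto
next
  case (2 s) then have "e = m s (m z e)" using assms by (metis assoc)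
  then show ?thesis using 2 assms by blast
next
  case (3 t) then have "e = m e (m z t)" using assms by (metis assoc)
  then show ?thesis using 3 assms by blast
next
  case (4 s t) then show ?thesis using assms by (metis assoc)
qed


definition pw where "pw b n = ((m b)^^n) b"

lemma pw_0[simp]: "pw b 0 = b" unfolding pw_def by simp
lemma pw_Suc: "pw b (Suc n) = m b (pw b n)" unfolding pw_def by simp
lemma pw_S[simp]: "b\<in>S \<Longrightarrow> pw b n \<in> S" by (induction n) (auto simp: pw_Suc)
lemma pw_add: "b\<in>S \<Longrightarrow> m (pw b i) (pw b j) = pw b (i+j+1)"
proof (induction i)
  case 0 then show ?case by (simp add: pw_Suc)
next
  case (Suc i)
  have "m (pw b (Suc i)) (pw b j) = m b (m (pw b i) (pw b j))" using Suc.prems by (simp add: pw_Suc assoc)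
  also have "\<dots> = pw b (Suc i + j + 1)" using Suc by (simp add: pw_Suc)
  finally show ?case .
qed

lemma pw_iter:
  assumes "s\<in>S" "b\<in>S" "e\<in>S" "e = m s (m e b)"
  shows "e = m (pw s n) (m e (pw b n))"
proof (induction n)
  case 0 then show ?case using assms by simp
next
  case (Suc n)
  let ?E = "m (pw s n) (m e (pw b n))"
  have "e = m s (m e b)" by (rule assms(4))
  also have "\<dots> = m s (m ?E b)" by (simp only: Suc.IH[symmetric])
  also have "\<dots> = m (m s (pw s n)) (m e (m (pw b n) b))" using assms by (simp add: assoc)
  also have "\<dots> = m (pw s (Suc n)) (m e (pw b (Suc n)))"
    using pw_add[of b n 0] assms by (simp add: pw_Suc)
  finally show ?case .
qed

lemma stab_R:
  assumes "e\<in>S" "q\<in>S" "s\<in>S" "t\<in>S" "m e q = q" "e = m s (m q t)"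
  shows "\<exists>v\<in>S. m q v = e"
proof -
  define b where "b = m q t"
  have bS: "b \<in> S" using assms b_def by simp
  have eb: "m e b = b" unfolding b_def using assms by (simp flip: assoc)
  have it: "\<And>n. e = m (pw s n) (m e (pw b n))"
    using pw_iter[of s b e] assms bS eb b_def by simp
  have "\<not> inj (pw b)"
  proof
    assume "inj (pw b)"
    then have "infinite (range (pw b))" using finite_imageD by blast
    moreover have "range (pw b) \<subseteq> S" using bS by auto
    ultimately show False using finS finite_subset by blast
  qed
  then obtain i j where ij: "i \<noteq> j" "pw b i = pw b j" unfolding inj_def by blast
  have "\<exists>i d. pw b i = pw b (i + d + 1)"
  proof (cases "i < j")
    case True then show ?thesis using ij by (intro exI[of _ i] exI[of _ "j - i - 1"]) auto
  next
    case False then show ?thesis using ij by (intro exI[of _ j] exI[of _ "i - j - 1"]) auto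
  qed
  then obtain i d where id: "pw b i = pw b (i + d + 1)" by blast
  have "e = m (pw s i) (m e (pw b i))" by (rule it)
  also have "\<dots> = m (pw s i) (m e (m (pw b i) (pw b d)))" using id pw_add[of b i d] bS by simp
  also have "\<dots> = m (m (pw s i) (m e (pw b i))) (pw b d)" using bS assms by (simp add: assoc)
  also have "\<dots> = m e (pw b d)" by (simp only: it[symmetric])
  finally have e1: "e = m e (pw b d)" .
  show ?thesis
  proof (cases d)
    case 0
    then have "e = m q t" using e1 eb b_def by simp
    then show ?thesis using assms by blast
  next
    case (Suc d')
    then have "e = m e (m b (pw b d'))" using e1 by (simp add: pw_Suc)
    also have "\<dots> = m b (pw b d')" using bS assms(1) by (simp add: eb flip: assoc)
    also have "\<dots> = m q (m t (pw b d'))" unfolding b_def using assms bS by (simp add: assoc)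
    finally show ?thesis using assms bS by (intro bexI[of _ "m t (pw b d')"]) auto
  qed
qed

lemma stab_L:
  assumes "e\<in>S" "q\<in>S" "s\<in>S" "t\<in>S" "m q e = q" "e = m s (m q t)" "st e = e"
  shows "\<exists>v\<in>S. m v q = e"
proof -
  have 1: "m e (st q) = st q" using stm[of q e] assms by simp
  have "st e = st (m s (m q t))" using assms by simp
  then have 2: "e = m (st t) (m (st q) (st s))" using assms by (simp add: stm assoc)
  obtain v where v: "v\<in>S" "m (st q) v = e" using stab_R[OF assms(1) _ _ _ 1 2] assms by auto
  have "st (m (st q) v) = st e" using v by simp
  then have "m (st v) q = e" using v(1) assms(2,7) by (simp add: stm)
  then show ?thesis using v by blast
qed

lemma stab_H:
  assumes "e\<in>S" "m e e = e" "st e = e" "inR e x" "inL e y" "s\<in>S" "t\<in>S"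
    and eq: "e = m s (m (m x y) t)"
  shows "inL e (m x y) \<and> inR e (m x y)"
proof -
  have x: "x\<in>S" "m e x = x" using assms(4) unfolding inR_def by auto
  have y: "y\<in>S" "m y e = y" using assms(5) unfolding inL_def by auto
  have q1: "m e (m x y) = m x y" using x y assms(1) by (simp flip: assoc)
  have q2: "m (m x y) e = m x y" using x y assms(1) by (simp add: assoc)
  obtain v where "v\<in>S" "m (m x y) v = e" using stab_R[OF assms(1) _ assms(6,7) q1 eq] x y by auto
  moreover obtain w where "w\<in>S" "m w (m x y) = e" using stab_L[OF assms(1) _ assms(6,7) q2 eq assms(3)] x y by auto
  ultimately show ?thesis unfolding inL_def inR_def using q1 q2 x y by auto
qed



lemma inR_st: assumes "inR e x" "e\<in>S" "st e = e" shows "inL e (st x)"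
proof -
  obtain z where z: "x\<in>S" "m e x = x" "z\<in>S" "m x z = e" using assms unfolding inR_def by blast
  have 1: "m (st x) e = st x" using stm[of e x] z assms by simp
  have 2: "m (st z) (st x) = e" using stm[of x z] z assms by simp
  show ?thesis unfolding inL_def using 1 2 z by auto
qed

lemma inL_st: assumes "inL e x" "e\<in>S" "st e = e" shows "inR e (st x)"
proof -
  obtain z where z: "x\<in>S" "m x e = x" "z\<in>S" "m z x = e" using assms unfolding inL_def by blast
  have 1: "m e (st x) = st x" using stm[of x e] z assms by simp
  have 2: "m (st x) (st z) = e" using stm[of z x] z assms by simp
  show ?thesis unfolding inR_def using 1 2 z by auto
qed

lemma inR_Rrel: assumes "inR e x" "e\<in>S" shows "Rrel S m x e"
proof -
  obtain z where z: "x\<in>S" "m e x = x" "z\<in>S" "m x z = e" using assms unfolding inR_def by blast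
  show ?thesis unfolding Rrel_def Rle_def using z by force
qed

lemma point_rel:
  assumes e: "e\<in>S" and a: "inL e a" and g: "inL e g" "inR e g" and k: "inR e k"
  defines "z \<equiv> m (m a g) k"
  shows "z \<in> S" "Lrel S m z k" "Rrel S m z a" "Drel S m e z"
proof -
  have S: "a\<in>S" "g\<in>S" "k\<in>S" using a g k unfolding inL_def inR_def by auto
  show zS: "z\<in>S" unfolding z_def using S by simp
  have ag: "inL e (m a g)" using inL_m a g e by blast
  obtain w where w: "w\<in>S" "m w (m a g) = e" using ag unfolding inL_def by blast
  have ke: "m e k = k" using k unfolding inR_def by simp
  have "m w z = m (m w (m a g)) k" unfolding z_def using w(1) S by (simp add: assoc)
  also have "\<dots> = k" using w ke by simp
  finally have kz: "k = m w z" by simp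
  show Lr: "Lrel S m z k" unfolding Lrel_def Lle_def using kz w z_def S by auto
  have gk: "inR e (m g k)" using inR_m g k e by blast
  obtain w' where w': "w'\<in>S" "m (m g k) w' = e" using gk unfolding inR_def by blast
  have ae: "m a e = a" using a unfolding inL_def by simp
  have "m z w' = m a (m (m g k) w')" unfolding z_def using w'(1) S by (simp add: assoc)
  also have "\<dots> = a" using w' ae by simp
  finally have az: "a = m z w'" by simp
  have z2: "z = m a (m g k)" unfolding z_def using S by (simp add: assoc)
  show "Rrel S m z a" unfolding Rrel_def Rle_def using az w' z2 S by auto
  have "Rrel S m e k" using inR_Rrel[OF k e] Rrel_sym by blast
  then have "Drel S m e k" using Drel_R e S by blast
  moreover have "Drel S m k z" using Drel_L Lr Lrel_sym S zS by blast
  ultimately show "Drel S m e z" using Drel_trans by blast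
qed

lemma Rle_ex: assumes "Rle S m y a" "m a f = a" "f\<in>S" shows "\<exists>c\<in>S. y = m a c"
proof (cases "y = a")
  case True then show ?thesis using assms(2,3) by (intro bexI[of _ f]) auto
next
  case False then show ?thesis using assms(1) unfolding Rle_def by auto
qed

lemma Lle_ex: assumes "Lle S m y a" "m f a = a" "f\<in>S" shows "\<exists>c\<in>S. y = m c a"
proof (cases "y = a")
  case True then show ?thesis using assms(2,3) by (intro bexI[of _ f]) auto
next
  case False then show ?thesis using assms(1) unfolding Lle_def by auto
qed

lemma decomp:
  assumes e: "e\<in>S" "m e e = e" and a: "inL e a" and k: "inR e k" and y: "y\<in>S"
    and ya: "Rrel S m y a" and yk: "Lrel S m y k"
  shows "\<exists>g. inL e g \<and> inR e g \<and> y = m (m a g) k"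
proof -
  obtain x1 where x1: "x1\<in>S" "m x1 a = e" using a unfolding inL_def by blast
  obtain x2 where x2: "x2\<in>S" "m k x2 = e" using k unfolding inR_def by blast
  have aS: "a\<in>S" "m a e = a" using a unfolding inL_def by auto
  have kS: "k\<in>S" "m e k = k" using k unfolding inR_def by auto
  obtain c where c: "c\<in>S" "y = m a c" using Rle_ex[of y a e] ya aS e unfolding Rrel_def by blast
  obtain d where d: "d\<in>S" "y = m d k" using Lle_ex[of y k e] yk kS e unfolding Lrel_def by blast
  have h1: "m a (m x1 y) = y"
  proof -
    have "m a (m x1 y) = m (m a (m x1 a)) c" unfolding c(2) using c(1) aS(1) x1(1) by (simp add: assoc)
    also have "\<dots> = m a c" by (simp only: x1(2) aS(2))
    finally show ?thesis using c(2) by simp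
  qed
  have h2: "m y (m x2 k) = y"
  proof -
    have "m y (m x2 k) = m d (m (m k x2) k)" unfolding d(2) using d(1) kS(1) x2(1) by (simp add: assoc)
    also have "\<dots> = m d k" by (simp only: x2(2) kS(2))
    finally show ?thesis using d(2) by simp
  qed
  have x2kS: "m x2 k \<in> S" using x2(1) kS(1) by simp
  have tt: "\<exists>t\<in>S. a = m y t" using Rle_ex[OF _ h2 x2kS] ya unfolding Rrel_def by blast
  then obtain t where t: "t\<in>S" "a = m y t" by blast
  have h1': "m (m a x1) y = y" using h1 aS(1) x1(1) y by (simp add: assoc)
  have ax1S: "m a x1 \<in> S" using x1(1) aS(1) by simp
  have ss: "\<exists>s\<in>S. k = m s y" using Lle_ex[OF _ h1' ax1S] yk unfolding Lrel_def by blast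
  then obtain s where s: "s\<in>S" "k = m s y" by blast
  define g where "g = m x1 (m y x2)"
  have gS: "g\<in>S" unfolding g_def using x1(1) x2(1) y by simp
  have yeq: "m (m a g) k = y"
  proof -
    have "m (m a g) k = m (m a (m x1 y)) (m x2 k)" unfolding g_def using aS(1) x1(1) x2(1) y kS(1) by (simp add: assoc)
    also have "\<dots> = y" by (simp only: h1 h2)
    finally show ?thesis .
  qed
  have eg: "m e g = g"
  proof -
    have "m e g = m (m x1 a) g" by (simp only: x1(2))
    also have "\<dots> = m x1 (m (m a (m x1 y)) x2)" unfolding g_def using x1(1) x2(1) y aS(1) by (simp add: assoc)
    also have "\<dots> = g" unfolding g_def by (simp only: h1)
    finally show ?thesis .
  qed
  have ge: "m g e = g"
  proof -
    have "m g e = m g (m k x2)" by (simp only: x2(2))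
    also have "\<dots> = m x1 (m (m y (m x2 k)) x2)" unfolding g_def using x1(1) x2(1) y kS(1) by (simp add: assoc)
    also have "\<dots> = g" unfolding g_def by (simp only: h2)
    finally show ?thesis .
  qed
  have zg: "m (m s a) g = e"
  proof -
    have "m (m s a) g = m (m s (m a (m x1 y))) x2" unfolding g_def using s(1) x1(1) x2(1) y aS(1) by (simp add: assoc)
    also have "\<dots> = m (m s y) x2" by (simp only: h1)
    also have "\<dots> = m k x2" by (simp only: s(2))
    also have "\<dots> = e" by (simp only: x2(2))
    finally show ?thesis .
  qed
  have gz: "m g (m k t) = e"
  proof -
    have "m g (m k t) = m x1 (m (m y (m x2 k)) t)" unfolding g_def using t(1) x1(1) x2(1) y kS(1) by (simp add: assoc)
    also have "\<dots> = m x1 (m y t)" by (simp only: h2)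
    also have "\<dots> = m x1 a" by (simp only: t(2))
    also have "\<dots> = e" by (simp only: x1(2))
    finally show ?thesis .
  qed
  have saS: "m s a \<in> S" "m k t \<in> S" using s(1) aS(1) t(1) kS(1) by auto
  have "inL e g" unfolding inL_def using gS ge zg saS by blast
  moreover have "inR e g" unfolding inR_def using gS eg gz saS by blast
  ultimately show ?thesis using yeq by blast
qed

lemma Jle_ex: assumes "Jle S m e z" "e\<in>S" "z\<in>S" "m e e = e" "z = m A (m p B)" "A\<in>S" "p\<in>S" "B\<in>S"
  shows "\<exists>s\<in>S. \<exists>t\<in>S. e = m s (m p t)"
proof -
  obtain s t where st: "s\<in>S" "t\<in>S" "e = m s (m z t)" using Jle_inv[OF assms(1-4)] by blast
  have "m s (m z t) = m (m s A) (m p (m B t))" unfolding assms(5) using st(1,2) assms(6-8) by (simp add: assoc)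
  then have "e = m (m s A) (m p (m B t))" using st(3) by simp
  moreover have "m s A \<in> S" "m B t \<in> S" using st(1,2) assms(6-8) by auto
  ultimately show ?thesis by blast
qed

lemma below:
  assumes "D \<in> Dclasses S m" "e \<in> D" "m e e = e" "z\<in>S" "Jle S m z e" "\<not> Jle S m e z"
  shows "below_D S m z D"
  unfolding below_D_def Dless_def using assms(2,4,5,6) Dclass_self[OF assms(4)] by blast

end


definition lin :: "'j set \<Rightarrow> ('j \<Rightarrow> 'b) \<Rightarrow> ('j \<Rightarrow> 'r::comm_ring_1) \<Rightarrow> 'b \<Rightarrow> 'r" where
  "lin J \<psi> v = (\<lambda>z. \<Sum>j\<in>J. if \<psi> j = z then v j else 0)"

lemma sum_fun_apply: "(\<Sum>i\<in>A. f i) x = (\<Sum>i\<in>A. f i x)"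
  by (induction A rule: infinite_finite_induct) auto

lemma sum_delta_mult: "finite X \<Longrightarrow> a \<in> X \<Longrightarrow> (\<Sum>x\<in>X. (if a = x then c else 0) * f x) = c * (f a :: 'r::comm_ring_1)"
proof -
  assume "finite X" "a\<in>X"
  have "(\<Sum>x\<in>X. (if a = x then c else 0) * f x) = (\<Sum>x\<in>X. if a = x then c * f a else 0)"
    by (rule sum.cong) auto
  also have "\<dots> = c * f a" using \<open>finite X\<close> \<open>a\<in>X\<close> by simp
  finally show ?thesis .
qed

lemma ifprod:
  fixes A :: "'r::comm_ring_1"
  assumes "finite I" "finite J"
  shows "(if c then A * (\<Sum>i\<in>I. if p i then a i else 0) * (\<Sum>j\<in>J. if q j then b j else 0) else 0)
   = (\<Sum>i\<in>I. \<Sum>j\<in>J. if p i \<and> q j \<and> c then A * a i * b j else 0)"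
proof (cases c)
  case True
  have "A * (\<Sum>i\<in>I. if p i then a i else 0) * (\<Sum>j\<in>J. if q j then b j else 0)
      = (\<Sum>i\<in>I. \<Sum>j\<in>J. A * (if p i then a i else 0) * (if q j then b j else 0))"
    by (simp add: sum_distrib_left sum_distrib_right mult.assoc, subst sum.swap, simp)
  also have "\<dots> = (\<Sum>i\<in>I. \<Sum>j\<in>J. if p i \<and> q j \<and> c then A * a i * b j else 0)"
    using True by (intro sum.cong refl) auto
  finally show ?thesis using True by simp
qed simp

lemma sum_delta2:
  assumes "finite X" "a \<in> X"
  shows "(\<Sum>x\<in>X. if a = x \<and> P x then f x else 0) = (if P a then f a else (0::'r::comm_ring_1))"
proof -
  have "(\<Sum>x\<in>X. if a = x \<and> P x then f x else 0) = (\<Sum>x\<in>X. if x = a then (if P x then f x else 0) else 0)"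
    by (intro sum.cong refl) auto
  also have "\<dots> = (if P a then f a else 0)" using assms by simp
  finally show ?thesis .
qed

lemma tw_mult_lin:
  fixes A :: "'b \<Rightarrow> 'b \<Rightarrow> 'r::comm_ring_1"
  assumes fin: "finite X" "finite J1" "finite J2" and im: "\<psi>1 ` J1 \<subseteq> X" "\<psi>2 ` J2 \<subseteq> X"
  shows "tw_mult X mm A (lin J1 \<psi>1 v1) (lin J2 \<psi>2 v2)
       = lin (J1 \<times> J2) (\<lambda>(i,j). mm (\<psi>1 i) (\<psi>2 j)) (\<lambda>(i,j). A (\<psi>1 i) (\<psi>2 j) * v1 i * v2 j)"
proof (rule ext)
  fix z
  have "tw_mult X mm A (lin J1 \<psi>1 v1) (lin J2 \<psi>2 v2) z
      = (\<Sum>x\<in>X. \<Sum>y\<in>X. \<Sum>i\<in>J1. \<Sum>j\<in>J2. if \<psi>1 i = x \<and> \<psi>2 j = y \<and> mm x y = z then A x y * v1 i * v2 j else 0)"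
    unfolding tw_mult_def lin_def by (intro sum.cong refl) (rule ifprod[OF fin(2,3)])
  also have "\<dots> = (\<Sum>i\<in>J1. \<Sum>j\<in>J2. \<Sum>x\<in>X. \<Sum>y\<in>X. if \<psi>1 i = x \<and> \<psi>2 j = y \<and> mm x y = z then A x y * v1 i * v2 j else 0)"
  proof -
    let ?F = "\<lambda>x y i j. if \<psi>1 i = x \<and> \<psi>2 j = y \<and> mm x y = z then A x y * v1 i * v2 j else 0"
    have "(\<Sum>x\<in>X. \<Sum>y\<in>X. \<Sum>i\<in>J1. \<Sum>j\<in>J2. ?F x y i j) = (\<Sum>x\<in>X. \<Sum>i\<in>J1. \<Sum>y\<in>X. \<Sum>j\<in>J2. ?F x y i j)"
      by (rule sum.cong[OF refl], rule sum.swap)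
    also have "\<dots> = (\<Sum>x\<in>X. \<Sum>i\<in>J1. \<Sum>j\<in>J2. \<Sum>y\<in>X. ?F x y i j)"
      by (rule sum.cong[OF refl], rule sum.cong[OF refl], rule sum.swap)
    also have "\<dots> = (\<Sum>i\<in>J1. \<Sum>x\<in>X. \<Sum>j\<in>J2. \<Sum>y\<in>X. ?F x y i j)"
      by (rule sum.swap)
    also have "\<dots> = (\<Sum>i\<in>J1. \<Sum>j\<in>J2. \<Sum>x\<in>X. \<Sum>y\<in>X. ?F x y i j)"
      by (rule sum.cong[OF refl], rule sum.swap)
    finally show ?thesis .
  qed
  also have "\<dots> = (\<Sum>i\<in>J1. \<Sum>j\<in>J2. (if mm (\<psi>1 i) (\<psi>2 j) = z then A (\<psi>1 i) (\<psi>2 j) * v1 i * v2 j else 0))"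
  proof (intro sum.cong refl)
    fix i j assume ij: "i\<in>J1" "j\<in>J2"
    have "(\<Sum>x\<in>X. \<Sum>y\<in>X. if \<psi>1 i = x \<and> \<psi>2 j = y \<and> mm x y = z then A x y * v1 i * v2 j else 0)
        = (\<Sum>x\<in>X. if \<psi>1 i = x then (\<Sum>y\<in>X. if \<psi>2 j = y \<and> mm x y = z then A x y * v1 i * v2 j else 0) else 0)"
      by (intro sum.cong refl) auto
    also have "\<dots> = (\<Sum>y\<in>X. if \<psi>2 j = y \<and> mm (\<psi>1 i) y = z then A (\<psi>1 i) y * v1 i * v2 j else 0)"
      using fin(1) ij im by (subst sum.delta') auto
    also have "\<dots> = (if mm (\<psi>1 i) (\<psi>2 j) = z then A (\<psi>1 i) (\<psi>2 j) * v1 i * v2 j else 0)"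
      using sum_delta2[OF fin(1), of "\<psi>2 j" "\<lambda>y. mm (\<psi>1 i) y = z" "\<lambda>y. A (\<psi>1 i) y * v1 i * v2 j"] ij im by auto
    finally show "(\<Sum>x\<in>X. \<Sum>y\<in>X. if \<psi>1 i = x \<and> \<psi>2 j = y \<and> mm x y = z then A x y * v1 i * v2 j else 0) = (if mm (\<psi>1 i) (\<psi>2 j) = z then A (\<psi>1 i) (\<psi>2 j) * v1 i * v2 j else 0)" .
  qed
  also have "\<dots> = lin (J1 \<times> J2) (\<lambda>(i,j). mm (\<psi>1 i) (\<psi>2 j)) (\<lambda>(i,j). A (\<psi>1 i) (\<psi>2 j) * v1 i * v2 j) z"
    unfolding lin_def by (simp add: sum.cartesian_product, intro sum.cong refl) auto
  finally show "tw_mult X mm A (lin J1 \<psi>1 v1) (lin J2 \<psi>2 v2) z = lin (J1 \<times> J2) (\<lambda>(i,j). mm (\<psi>1 i) (\<psi>2 j)) (\<lambda>(i,j). A (\<psi>1 i) (\<psi>2 j) * v1 i * v2 j) z" .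
qed


lemma lin_nz: "lin J \<psi> v z \<noteq> 0 \<Longrightarrow> \<exists>j\<in>J. \<psi> j = z"
proof (rule ccontr)
  assume a: "lin J \<psi> v z \<noteq> 0" "\<not> (\<exists>j\<in>J. \<psi> j = z)"
  then have "lin J \<psi> v z = 0" unfolding lin_def by (intro sum.neutral) auto
  then show False using a by simp
qed

lemma lin_reindex: "bij_betw f J' J \<Longrightarrow> lin J \<psi> v = lin J' (\<lambda>j. \<psi> (f j)) (\<lambda>j. v (f j))"
  unfolding lin_def by (rule ext) (simp add: sum.reindex_bij_betw[symmetric])

lemma lin_cong: "(\<And>j. j\<in>J \<Longrightarrow> \<psi> j = \<psi>' j) \<Longrightarrow> (\<And>j. j\<in>J \<Longrightarrow> v j = v' j) \<Longrightarrow> lin J \<psi> v = lin J \<psi>' v'"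
  unfolding lin_def by (rule ext) (intro sum.cong refl, auto)

lemma lin_sum: "lin J \<psi> v = (\<Sum>j\<in>J. smul (v j) (basis_elt (\<psi> j)))"
  unfolding lin_def smul_def basis_elt_def by (rule ext) (auto simp: sum_fun_apply intro!: sum.cong)

lemma lin_id: assumes "finite X" "\<And>x. x \<notin> X \<Longrightarrow> F x = 0" shows "F = lin X (\<lambda>x. x) F"
proof (rule ext)
  fix z show "F z = lin X (\<lambda>x. x) F z"
    unfolding lin_def using assms by (cases "z \<in> X") (auto simp: sum.delta)
qed

lemma lin_smul: "lin J \<psi> (\<lambda>j. c * v j) = smul c (lin J \<psi> v)"
  unfolding lin_def smul_def by (rule ext) (auto simp: sum_distrib_left intro!: sum.cong)

lemma lin_zero: "lin J \<psi> (\<lambda>j. 0) = 0"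
  unfolding lin_def by (rule ext) simp

lemma lin_add: "lin J \<psi> (\<lambda>j. v j + w j) = lin J \<psi> v + lin J \<psi> w"
  unfolding lin_def by (rule ext) (auto simp: sum.distrib[symmetric] intro!: sum.cong)

lemma lin_tr:
  fixes W :: "'b \<Rightarrow> 'r::comm_ring_1"
  assumes fin: "finite X" "finite J" and im: "\<psi> ` J \<subseteq> X"
  shows "lin X \<phi> (\<lambda>g. lin J \<psi> v g * W g) = lin J (\<lambda>j. \<phi> (\<psi> j)) (\<lambda>j. v j * W (\<psi> j))"
proof (rule ext)
  fix z
  have "lin X \<phi> (\<lambda>g. lin J \<psi> v g * W g) z = (\<Sum>g\<in>X. \<Sum>j\<in>J. if \<psi> j = g \<and> \<phi> g = z then v j * W g else 0)"
    unfolding lin_def by (intro sum.cong refl) (auto simp: sum_distrib_right intro!: sum.cong)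
  also have "\<dots> = (\<Sum>j\<in>J. \<Sum>g\<in>X. if \<psi> j = g \<and> \<phi> g = z then v j * W g else 0)"
    by (rule sum.swap)
  also have "\<dots> = (\<Sum>j\<in>J. if \<phi> (\<psi> j) = z then v j * W (\<psi> j) else 0)"
  proof (intro sum.cong refl)
    fix j assume "j\<in>J"
    then show "(\<Sum>g\<in>X. if \<psi> j = g \<and> \<phi> g = z then v j * W g else 0) = (if \<phi> (\<psi> j) = z then v j * W (\<psi> j) else 0)"
      using sum_delta2[OF fin(1), of "\<psi> j" "\<lambda>g. \<phi> g = z" "\<lambda>g. v j * W g"] im by auto
  qed
  also have "\<dots> = lin J (\<lambda>j. \<phi> (\<psi> j)) (\<lambda>j. v j * W (\<psi> j)) z" unfolding lin_def ..
  finally show "lin X \<phi> (\<lambda>g. lin J \<psi> v g * W g) z = lin J (\<lambda>j. \<phi> (\<psi> j)) (\<lambda>j. v j * W (\<psi> j)) z" .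
qed

lemma lin_eval_inj:
  assumes "finite X" "inj_on \<phi> X" "a \<in> X"
  shows "lin X \<phi> w (\<phi> a) = w a"
proof -
  have "lin X \<phi> w (\<phi> a) = (\<Sum>g\<in>X. if g = a then w g else 0)"
    unfolding lin_def using assms by (intro sum.cong refl) (auto dest: inj_onD)
  also have "\<dots> = w a" using assms by simp
  finally show ?thesis .
qed

lemma span_0: "finite I \<Longrightarrow> 0 \<in> cell_span I v"
  unfolding cell_span_def by (rule CollectI, rule exI[of _ "\<lambda>_. 0"]) (auto simp: smul_def zero_fun_def)

lemma span_add: "f \<in> cell_span I v \<Longrightarrow> g \<in> cell_span I v \<Longrightarrow> f + g \<in> cell_span I v"
proof -
  assume "f \<in> cell_span I v" "g \<in> cell_span I v"
  then obtain c d where "f = (\<Sum>i\<in>I. smul (c i) (v i))" "g = (\<Sum>i\<in>I. smul (d i) (v i))" unfolding cell_span_def by blast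
  then have "f + g = (\<Sum>i\<in>I. smul (c i + d i) (v i))"
    by (auto simp: sum_fun_apply smul_def distrib_right sum.distrib)
  then show ?thesis unfolding cell_span_def by (intro CollectI exI[of _ "\<lambda>i. c i + d i"])
qed

lemma span_smul: "f \<in> cell_span I v \<Longrightarrow> smul a f \<in> cell_span I v"
proof -
  assume "f \<in> cell_span I v"
  then obtain c where "f = (\<Sum>i\<in>I. smul (c i) (v i))" unfolding cell_span_def by blast
  then have "smul a f = (\<Sum>i\<in>I. smul (a * c i) (v i))"
    by (rule ssubst) (auto simp: smul_def sum_fun_apply sum_distrib_left mult.assoc)
  then show ?thesis unfolding cell_span_def by (intro CollectI exI[of _ "\<lambda>i. a * c i"])
qed

lemma span_sum: assumes "finite I" "finite A" "\<And>a. a \<in> A \<Longrightarrow> f a \<in> cell_span I v" shows "(\<Sum>a\<in>A. f a) \<in> cell_span I v"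
  using assms(2,3) by (induction A rule: finite_induct) (auto intro: span_0[OF assms(1)] span_add)

lemma span_gen: assumes "finite I" "i \<in> I" shows "v i \<in> cell_span I v"
proof -
  have "v i = (\<Sum>j\<in>I. smul (if j = i then 1 else 0) (v j))"
  proof (rule ext)
    fix x
    have "(\<Sum>j\<in>I. smul (if j = i then 1 else 0) (v j)) x = (\<Sum>j\<in>I. if j = i then v j x else 0)"
      unfolding sum_fun_apply smul_def by (intro sum.cong refl) auto
    also have "\<dots> = v i x" using assms by simp
    finally show "v i x = (\<Sum>j\<in>I. smul (if j = i then 1 else 0) (v j)) x" by simp
  qed
  then show ?thesis unfolding cell_span_def by (intro CollectI exI[of _ "\<lambda>j. if j = i then 1 else 0"])
qed


locale setting = sgi S m st
  for S :: "'s set" and m :: "'s \<Rightarrow> 's \<Rightarrow> 's" and st :: "'s \<Rightarrow> 's" +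
  fixes al :: "'s \<Rightarrow> 's \<Rightarrow> 'r::comm_ring_1"
    and one :: "'s set \<Rightarrow> 's"
    and be :: "'s set \<Rightarrow> 's \<Rightarrow> 's \<Rightarrow> 'r"
    and LamD :: "'s set \<Rightarrow> 'l set" and leD :: "'s set \<Rightarrow> 'l \<Rightarrow> 'l \<Rightarrow> bool"
    and MD :: "'s set \<Rightarrow> 'l \<Rightarrow> 'm set"
    and CD :: "'s set \<Rightarrow> 'l \<Rightarrow> 'm \<Rightarrow> 'm \<Rightarrow> ('s \<Rightarrow> 'r)"
    and u :: "'s set \<Rightarrow> 's"
  assumes tw: "twisting S m al"
    and al_sym: "\<forall>x\<in>S. \<forall>y\<in>S. al x y = al (st y) (st x)"
    and one_D: "\<forall>D\<in>Dclasses S m. one D \<in> D \<and> m (one D) (one D) = one D \<and> st (one D) = one D"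
    and be_unit: "\<forall>D\<in>Dclasses S m. \<forall>x y. inLL S m st one D x y \<longrightarrow> be D x y dvd 1"
    and be_cocycle: "\<forall>D\<in>Dclasses S m. \<forall>x\<in>S. \<forall>y\<in>S. \<forall>z\<in>S.
        inLL S m st one D x y \<and> inLL S m st one D (m x y) z \<and>
        inLL S m st one D x (m y z) \<and> inLL S m st one D y z \<longrightarrow>
        be D x y * be D (m x y) z = be D x (m y z) * be D y z"
    and be_al: "\<forall>D\<in>Dclasses S m. \<forall>x\<in>S. \<forall>y\<in>S. \<forall>z\<in>S.
        inLL S m st one D (m x y) z \<and> inLL S m st one D y z \<longrightarrow>
        al x y * be D (m x y) z = al x (m y z) * be D y z"
    and be_sym: "\<forall>D\<in>Dclasses S m. \<forall>x\<in>S. \<forall>y\<in>S.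
        inLL S m st one D x y \<and> inLL S m st one D (st y) (st x) \<longrightarrow>
        be D x y = be D (st y) (st x)"
    and cell_G: "\<forall>D\<in>Dclasses S m.
        cellular (GD S m st one D) (tw_mult (GD S m st one D) m (be D)) (alg_star st)
                 (LamD D) (leD D) (MD D) (CD D)"
    and u_L: "\<forall>D\<in>Dclasses S m. \<forall>L\<in>Lclasses_in S m D. u L \<in> L \<and> Rrel S m (u L) (one D)"
begin

definition H where "H e g \<longleftrightarrow> inL e g \<and> inR e g"

lemma oneD: assumes "D \<in> Dclasses S m"
  shows "one D \<in> D" "one D \<in> S" "m (one D) (one D) = one D" "st (one D) = one D" "D = Dclass S m (one D)"
  using one_D assms Dclasses_sub Dclasses_mem by blast+

lemma G_iff: assumes "D \<in> Dclasses S m" shows "g \<in> GD S m st one D \<longleftrightarrow> H (one D) g"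
  unfolding GD_def LD_def H_def using Lclass_iff[of "one D" g] inR_iff[of "one D" g] oneD[OF assms] by blast

lemma inLL_iff: assumes "D \<in> Dclasses S m" shows "inLL S m st one D x y \<longleftrightarrow> inL (one D) x \<and> inR (one D) y"
  unfolding inLL_def LD_def using Lclass_iff[of "one D" x] inR_iff[of "one D" y] oneD[OF assms] by blast

lemma H_S: "H e g \<Longrightarrow> g \<in> S" unfolding H_def inL_def by blast

lemma G_sub: assumes "D \<in> Dclasses S m" shows "GD S m st one D \<subseteq> S"
  using G_iff[OF assms] H_S by blast

lemma G_fin: assumes "D \<in> Dclasses S m" shows "finite (GD S m st one D)"
  using G_sub[OF assms] finS finite_subset by blast

lemma H_m: "H e g \<Longrightarrow> H e h \<Longrightarrow> e \<in> S \<Longrightarrow> H e (m g h)"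
  unfolding H_def using inL_m inR_m by blast

lemma uL: assumes "D \<in> Dclasses S m" "L \<in> Lclasses_in S m D"
  shows "u L \<in> S" "inR (one D) (u L)" "inL (one D) (st (u L))" "Lclass S m (u L) = L"
proof -
  have 1: "u L \<in> L" "Rrel S m (u L) (one D)" using u_L assms by blast+
  obtain x where x: "x \<in> D" "L = Lclass S m x" using assms(2) unfolding Lclasses_in_def by blast
  have xS: "x\<in>S" using x Dclasses_sub assms by blast
  show uS: "u L \<in> S" using 1 x unfolding Lclass_def by blast
  show "inR (one D) (u L)" using Rrel_inR oneD[OF assms(1)] uS 1 by blast
  then show "inL (one D) (st (u L))" using inR_st oneD[OF assms(1)] by blast
  show "Lclass S m (u L) = L" using Lclass_mem[of "u L" x] 1 x xS by simp
qed

end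

context setting begin

definition phi where "phi L K g = m (m (st (u L)) g) (u K)"
definition W where "W D L K g = be D (st (u L)) g * be D (m (st (u L)) g) (u K)"
definition Tr where "Tr D L K F = lin (GD S m st one D) (phi L K) (\<lambda>g. F g * W D L K g)"

lemma bigC_Tr: "bigC S m st one be CD u p Ls Kt = Tr (fst p) (fst Ls) (fst Kt) (CD (fst p) (snd p) (snd Ls) (snd Kt))"
  unfolding bigC_def Tr_def lin_def phi_def W_def by (intro ext sum.cong refl) (simp add: mult.assoc)

lemma phi_props:
  assumes D: "D \<in> Dclasses S m" and L: "L \<in> Lclasses_in S m D" and K: "K \<in> Lclasses_in S m D"
    and g: "g \<in> GD S m st one D"
  shows "phi L K g \<in> S" "phi L K g \<in> D" "Lclass S m (phi L K g) = K" "Lclass S m (st (phi L K g)) = L"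
proof -
  note o = oneD[OF D]
  have gH: "inL (one D) g" "inR (one D) g" using G_iff[OF D] g unfolding H_def by auto
  note uLL = uL[OF D L] and uK = uL[OF D K]
  note pr = point_rel[OF o(2) uLL(3) gH uK(2)]
  show zS: "phi L K g \<in> S" using pr(1) unfolding phi_def .
  show "phi L K g \<in> D" using pr(1,4) o(5) unfolding phi_def Dclass_def by blast
  show "Lclass S m (phi L K g) = K" using Lclass_eq[OF pr(1) uK(1) pr(2)] uK(4) unfolding phi_def by simp
  have "Lrel S m (st (phi L K g)) (st (st (u L)))" using st_Rrel[OF pr(1) _ pr(3)] uLL(1) unfolding phi_def by simp
  then have "Lrel S m (st (phi L K g)) (u L)" using uLL(1) by simp
  then show "Lclass S m (st (phi L K g)) = L" using Lclass_eq uLL(1,4) zS stS by metis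
qed

lemma phi_inj:
  assumes D: "D \<in> Dclasses S m" and L: "L \<in> Lclasses_in S m D" and K: "K \<in> Lclasses_in S m D"
  shows "inj_on (phi L K) (GD S m st one D)"
proof (rule inj_onI)
  fix g g' assume g: "g \<in> GD S m st one D" "g' \<in> GD S m st one D" "phi L K g = phi L K g'"
  have gH: "inL (one D) g" "inR (one D) g" "inL (one D) g'" "inR (one D) g'" using G_iff[OF D] g unfolding H_def by auto
  show "g = g'" using H_inj[OF uL(3)[OF D L] uL(2)[OF D K] gH oneD(2)[OF D]] g(3) unfolding phi_def by blast
qed

lemma W_unit:
  assumes D: "D \<in> Dclasses S m" and L: "L \<in> Lclasses_in S m D" and K: "K \<in> Lclasses_in S m D"
    and g: "g \<in> GD S m st one D"
  shows "W D L K g dvd 1"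
proof -
  have gH: "inL (one D) g" "inR (one D) g" using G_iff[OF D] g unfolding H_def by auto
  have 1: "inLL S m st one D (st (u L)) g" using inLL_iff[OF D] uL[OF D L] gH by blast
  have "inL (one D) (m (st (u L)) g)" using inL_m[OF uL(3)[OF D L] gH] oneD[OF D] by blast
  then have 2: "inLL S m st one D (m (st (u L)) g) (u K)" using inLL_iff[OF D] uL[OF D K] by blast
  have "be D (st (u L)) g dvd 1" "be D (m (st (u L)) g) (u K) dvd 1" using be_unit D 1 2 by blast+
  then show ?thesis unfolding W_def using mult_dvd_mono[of "be D (st (u L)) g" 1 "be D (m (st (u L)) g) (u K)" 1] by simp
qed

lemma Tr_eval:
  assumes D: "D \<in> Dclasses S m" and L: "L \<in> Lclasses_in S m D" and K: "K \<in> Lclasses_in S m D"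
    and g: "g \<in> GD S m st one D"
  shows "Tr D L K F (phi L K g) = F g * W D L K g"
  unfolding Tr_def using lin_eval_inj[OF G_fin[OF D] phi_inj[OF D L K] g] .

lemma decomp_D:
  assumes D: "D \<in> Dclasses S m" and y: "y \<in> D"
  shows "\<exists>L1\<in>Lclasses_in S m D. \<exists>K1\<in>Lclasses_in S m D. \<exists>g\<in>GD S m st one D. y = phi L1 K1 g"
proof -
  note o = oneD[OF D]
  have yS: "y \<in> S" using y Dclasses_sub D by blast
  have "Drel S m (one D) y" using y o(5) unfolding Dclass_def by blast
  then have "Drel S m (one D) (st y)" using Drel_st o(4) by fastforce
  then have sty: "st y \<in> D" using o(5) yS unfolding Dclass_def by auto
  define L1 where "L1 = Lclass S m (st y)"
  define K1 where "K1 = Lclass S m y"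
  have L1: "L1 \<in> Lclasses_in S m D" unfolding L1_def Lclasses_in_def using sty by blast
  have K1: "K1 \<in> Lclasses_in S m D" unfolding K1_def Lclasses_in_def using y by blast
  have "u L1 \<in> L1" "u K1 \<in> K1" using u_L D L1 K1 by blast+
  then have r1: "Lrel S m (st y) (u L1)" and r2: "Lrel S m y (u K1)"
    unfolding L1_def K1_def Lclass_def by auto
  have "Rrel S m (st (st y)) (st (u L1))" using st_Lrel[OF _ _ r1] yS uL(1)[OF D L1] by simp
  then have r1': "Rrel S m y (st (u L1))" using yS by simp
  obtain g where g: "inL (one D) g" "inR (one D) g" "y = m (m (st (u L1)) g) (u K1)"
    using decomp[OF o(2,3) uL(3)[OF D L1] uL(2)[OF D K1] yS r1' r2] by blast
  have "g \<in> GD S m st one D" using G_iff[OF D] g unfolding H_def by blast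
  then show ?thesis using L1 K1 g(3) unfolding phi_def by blast
qed

end

context setting begin

lemma be_al': "D \<in> Dclasses S m \<Longrightarrow> x\<in>S \<Longrightarrow> y\<in>S \<Longrightarrow> z\<in>S \<Longrightarrow>
    inLL S m st one D (m x y) z \<Longrightarrow> inLL S m st one D y z \<Longrightarrow>
    al x y * be D (m x y) z = al x (m y z) * be D y z"
  using be_al by blast
lemma be_cocycle': "D \<in> Dclasses S m \<Longrightarrow> x\<in>S \<Longrightarrow> y\<in>S \<Longrightarrow> z\<in>S \<Longrightarrow>
    inLL S m st one D x y \<Longrightarrow> inLL S m st one D (m x y) z \<Longrightarrow>
    inLL S m st one D x (m y z) \<Longrightarrow> inLL S m st one D y z \<Longrightarrow>
    be D x y * be D (m x y) z = be D x (m y z) * be D y z"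
  using be_cocycle by blast
lemma be_sym': "D \<in> Dclasses S m \<Longrightarrow> x\<in>S \<Longrightarrow> y\<in>S \<Longrightarrow>
    inLL S m st one D x y \<Longrightarrow> inLL S m st one D (st y) (st x) \<Longrightarrow> be D x y = be D (st y) (st x)"
  using be_sym by blast
lemma al_sym': "x\<in>S \<Longrightarrow> y\<in>S \<Longrightarrow> al x y = al (st y) (st x)"
  using al_sym by blast

lemma rule2:
  assumes D: "D \<in> Dclasses S m" and S: "x\<in>S" "y\<in>S" "z\<in>S"
    and c1: "inLL S m st one D x y" and c2: "inLL S m st one D x (m y z)"
  shows "be D x y * al (m x y) z = be D x (m y z) * al y z"
proof -
  note o = oneD[OF D]
  have x: "inL (one D) x" and y: "inR (one D) y" and yz: "inR (one D) (m y z)"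
    using c1 c2 inLL_iff[OF D] by auto
  have szy: "m (st z) (st y) = st (m y z)" using stm S by simp
  have i1: "inLL S m st one D (m (st z) (st y)) (st x)"
    unfolding inLL_iff[OF D] szy using inR_st[OF yz o(2,4)] inL_st[OF x o(2,4)] by blast
  have i2: "inLL S m st one D (st y) (st x)"
    unfolding inLL_iff[OF D] using inR_st[OF y o(2,4)] inL_st[OF x o(2,4)] by blast
  have ba: "al (st z) (st y) * be D (m (st z) (st y)) (st x) = al (st z) (m (st y) (st x)) * be D (st y) (st x)"
    using be_al'[OF D _ _ _ i1 i2] S by simp
  have s1: "al (st z) (st y) = al y z" using al_sym'[of y z] S by simp
  have s2: "be D (m (st z) (st y)) (st x) = be D x (m y z)"
  proof -
    have "be D x (m y z) = be D (st (m y z)) (st x)"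
      using be_sym'[OF D _ _ c2] i1 S unfolding szy by simp
    then show ?thesis unfolding szy by simp
  qed
  have s3: "al (st z) (m (st y) (st x)) = al (m x y) z"
    using al_sym'[of "m x y" z] S stm[of x y] by simp
  have s4: "be D (st y) (st x) = be D x y" using be_sym'[OF D _ _ c1 i2] S by simp
  show ?thesis using ba s1 s2 s3 s4 by (simp add: mult.commute)
qed

lemma coef_id:
  assumes D: "D \<in> Dclasses S m"
    and a: "inL (one D) a" and x1: "inR (one D) x1" and y1: "inL (one D) y1" and b: "inR (one D) b"
    and p: "H (one D) (m x1 y1)" and g: "H (one D) g" and h: "H (one D) h"
  shows "al (m (m a g) x1) (m (m y1 h) b) * (be D a g * be D (m a g) x1) * (be D y1 h * be D (m y1 h) b)
   = al x1 y1 * be D g (m x1 y1) * be D (m g (m x1 y1)) h * (be D a (m (m g (m x1 y1)) h) * be D (m a (m (m g (m x1 y1)) h)) b)"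
proof -
  note o = oneD[OF D]
  define e where "e = one D"
  have eS: "e \<in> S" unfolding e_def using o by simp
  have S: "a\<in>S" "x1\<in>S" "y1\<in>S" "b\<in>S" "g\<in>S" "h\<in>S"
    using a x1 y1 b g h unfolding inL_def inR_def H_def by auto
  define P where "P = m x1 y1"
  define PH where "PH = m P h"
  define PHB where "PHB = m PH b"
  define GP where "GP = m g P"
  define GPH where "GPH = m GP h"
  define GPHB where "GPHB = m GPH b"
  define AG where "AG = m a g"
  define Y1H where "Y1H = m y1 h"
  define Y where "Y = m Y1H b"
  define X where "X = m AG x1"
  have SS: "P\<in>S" "PH\<in>S" "PHB\<in>S" "GP\<in>S" "GPH\<in>S" "GPHB\<in>S" "AG\<in>S" "Y1H\<in>S" "Y\<in>S" "X\<in>S"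
    unfolding P_def PH_def PHB_def GP_def GPH_def GPHB_def AG_def Y1H_def Y_def X_def using S by auto
  have eq1: "m x1 Y = PHB" unfolding Y_def Y1H_def PHB_def PH_def P_def using S by (simp add: assoc)
  have eq2: "m x1 Y1H = PH" unfolding Y1H_def PH_def P_def using S by (simp add: assoc)
  have eq3: "m g PHB = GPHB" unfolding GPHB_def GPH_def GP_def PHB_def PH_def using S SS(1) by (simp add: assoc)
  have eq4: "m g PH = GPH" unfolding GPH_def GP_def PH_def using S SS(1) by (simp add: assoc)
  have eq5: "m PH b = PHB" unfolding PHB_def ..
  have eq6: "m GPH b = GPHB" unfolding GPHB_def ..
  have gH: "inL e g" "inR e g" and hH: "inL e h" "inR e h" and pH: "inL e P" "inR e P"
    using g h p unfolding H_def e_def P_def by auto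
  have aL: "inL e a" and x1R: "inR e x1" and y1L: "inL e y1" and bR: "inR e b"
    using a x1 y1 b unfolding e_def by auto
  have AGL: "inL e AG" unfolding AG_def using inL_m[OF aL gH eS] .
  have Y1HL: "inL e Y1H" unfolding Y1H_def using inL_m[OF y1L hH eS] .
  have PHH: "inL e PH" "inR e PH" unfolding PH_def using inL_m[OF pH(1) hH eS] inR_m[OF pH(2,1) hH(2) eS] by auto
  have PHBR: "inR e PHB" unfolding PHB_def using inR_m[OF PHH(2,1) bR eS] .
  have GPH: "inL e GP" "inR e GP" unfolding GP_def using inL_m[OF gH(1) pH eS] inR_m[OF gH(2,1) pH(2) eS] by auto
  have GPHH: "inL e GPH" "inR e GPH" unfolding GPH_def using inL_m[OF GPH(1) hH eS] inR_m[OF GPH(2,1) hH(2) eS] by auto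
  have GPHBR: "inR e GPHB" unfolding GPHB_def using inR_m[OF GPHH(2,1) bR eS] .
  have aGPHL: "inL e (m a GPH)" using inL_m[OF aL GPHH eS] .
  note LL = inLL_iff[OF D, folded e_def]
  have facts: "inL e a" "inR e x1" "inL e y1" "inR e b" "inL e g" "inR e g" "inL e h" "inR e h" "inL e P" "inR e P"
    "inL e AG" "inL e Y1H" "inL e PH" "inR e PH" "inR e PHB" "inL e GP" "inR e GP" "inL e GPH" "inR e GPH" "inR e GPHB"
    "inL e (m a GPH)"
    using aL x1R y1L bR gH hH pH AGL Y1HL PHH PHBR GPH GPHH GPHBR aGPHL by auto
  have iA: "be D AG x1 * al X Y = be D AG PHB * al x1 Y"
  proof -
    have "be D AG x1 * al (m AG x1) Y = be D AG (m x1 Y) * al x1 Y"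
      by (rule rule2[OF D SS(7) S(2) SS(9)]) (simp_all only: LL eq1 facts simp_thms)
    then show ?thesis unfolding eq1 X_def .
  qed
  have iB: "al x1 Y1H * be D PH b = al x1 Y * be D Y1H b"
  proof -
    have "al x1 Y1H * be D (m x1 Y1H) b = al x1 (m Y1H b) * be D Y1H b"
      by (rule be_al'[OF D S(2) SS(8) S(4)]) (simp_all only: LL eq2 facts simp_thms)
    then show ?thesis unfolding eq2 Y_def .
  qed
  have iC: "al x1 y1 * be D P h = al x1 Y1H * be D y1 h"
  proof -
    have "al x1 y1 * be D (m x1 y1) h = al x1 (m y1 h) * be D y1 h"
      by (rule be_al'[OF D S(2) S(3) S(6)]) (simp_all only: LL P_def[symmetric] facts simp_thms)
    then show ?thesis unfolding P_def Y1H_def .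
  qed
  have iD: "be D a g * be D AG PHB = be D a GPHB * be D g PHB"
  proof -
    have "be D a g * be D (m a g) PHB = be D a (m g PHB) * be D g PHB"
      by (rule be_cocycle'[OF D S(1) S(5) SS(3)]) (simp_all only: LL AG_def[symmetric] eq3 facts simp_thms)
    then show ?thesis unfolding eq3 AG_def .
  qed
  have iE: "be D g PH * be D GPH b = be D g PHB * be D PH b"
  proof -
    have "be D g PH * be D (m g PH) b = be D g (m PH b) * be D PH b"
      by (rule be_cocycle'[OF D S(5) SS(2) S(4)]) (simp_all only: LL eq4 eq5 facts simp_thms)
    then show ?thesis unfolding eq4 eq5 .
  qed
  have iF: "be D g P * be D GP h = be D g PH * be D P h"
  proof -
    have "be D g P * be D (m g P) h = be D g (m P h) * be D P h"
      by (rule be_cocycle'[OF D S(5) SS(1) S(6)]) (simp_all only: LL GP_def[symmetric] PH_def[symmetric] facts simp_thms)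
    then show ?thesis unfolding GP_def PH_def .
  qed
  have iG: "be D a GPH * be D (m a GPH) b = be D a GPHB * be D GPH b"
  proof -
    have "be D a GPH * be D (m a GPH) b = be D a (m GPH b) * be D GPH b"
      by (rule be_cocycle'[OF D S(1) SS(5) S(4)]) (simp_all only: LL eq6 facts simp_thms)
    then show ?thesis unfolding eq6 .
  qed
  have "al X Y * (be D a g * be D AG x1) * (be D y1 h * be D Y1H b)
      = be D a g * (be D AG x1 * al X Y) * be D y1 h * be D Y1H b" by (simp only: mult_ac)
  also have "\<dots> = be D a g * (be D AG PHB * al x1 Y) * be D y1 h * be D Y1H b" by (simp only: iA)
  also have "\<dots> = be D a g * be D AG PHB * be D y1 h * (al x1 Y * be D Y1H b)" by (simp only: mult_ac)
  also have "\<dots> = be D a g * be D AG PHB * be D y1 h * (al x1 Y1H * be D PH b)" by (simp only: iB)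
  also have "\<dots> = be D a g * be D AG PHB * be D PH b * (al x1 Y1H * be D y1 h)" by (simp only: mult_ac)
  also have "\<dots> = be D a g * be D AG PHB * be D PH b * (al x1 y1 * be D P h)" by (simp only: iC)
  also have "\<dots> = al x1 y1 * be D PH b * be D P h * (be D a g * be D AG PHB)" by (simp only: mult_ac)
  also have "\<dots> = al x1 y1 * be D PH b * be D P h * (be D a GPHB * be D g PHB)" by (simp only: iD)
  also have "\<dots> = al x1 y1 * be D P h * be D a GPHB * (be D g PHB * be D PH b)" by (simp only: mult_ac)
  also have "\<dots> = al x1 y1 * be D P h * be D a GPHB * (be D g PH * be D GPH b)" by (simp only: iE)
  also have "\<dots> = al x1 y1 * be D a GPHB * be D GPH b * (be D g PH * be D P h)" by (simp only: mult_ac)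
  also have "\<dots> = al x1 y1 * be D a GPHB * be D GPH b * (be D g P * be D GP h)" by (simp only: iF)
  also have "\<dots> = al x1 y1 * be D g P * be D GP h * (be D a GPHB * be D GPH b)" by (simp only: mult_ac)
  also have "\<dots> = al x1 y1 * be D g P * be D GP h * (be D a GPH * be D (m a GPH) b)" by (simp only: iG)
  finally have "al X Y * (be D a g * be D AG x1) * (be D y1 h * be D Y1H b)
      = al x1 y1 * be D g P * be D GP h * (be D a GPH * be D (m a GPH) b)" .
  then show ?thesis unfolding X_def Y_def AG_def Y1H_def P_def GP_def GPH_def by simp
qed

end

context setting begin

lemma Tr_lin: "Tr D L K F = lin (GD S m st one D) (phi L K) (\<lambda>g. F g * W D L K g)"
  unfolding Tr_def ..

lemma phi_S: assumes D: "D \<in> Dclasses S m" and L: "L \<in> Lclasses_in S m D" and K: "K \<in> Lclasses_in S m D"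
  shows "phi L K ` GD S m st one D \<subseteq> S"
  using phi_props(1)[OF D L K] by blast

lemma carrier_lin: assumes D: "D \<in> Dclasses S m" and F: "F \<in> alg_carrier (GD S m st one D)"
  shows "F = lin (GD S m st one D) (\<lambda>x. x) F"
  using lin_id[OF G_fin[OF D]] F unfolding alg_carrier_def by blast

lemma tw_mult_zero2: "tw_mult X mm A F 0 = 0"
  unfolding tw_mult_def by (rule ext) (simp only: zero_fun_apply mult_zero_right mult_zero_left if_cancel sum.neutral_const)
lemma tw_mult_zero1: "tw_mult X mm A 0 F = 0"
  unfolding tw_mult_def by (rule ext) (simp only: zero_fun_apply mult_zero_right mult_zero_left if_cancel sum.neutral_const)

lemma prod_formula:
  assumes D: "D \<in> Dclasses S m" and L1: "L1 \<in> Lclasses_in S m D" and L: "L \<in> Lclasses_in S m D"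
    and K: "K \<in> Lclasses_in S m D" and K1: "K1 \<in> Lclasses_in S m D"
    and F1: "F1 \<in> alg_carrier (GD S m st one D)" and F2: "F2 \<in> alg_carrier (GD S m st one D)"
  shows "\<exists>(J::('s\<times>'s) set) \<psi> v. finite J \<and> (\<forall>j\<in>J. \<psi> j \<in> S \<and> below_D S m (\<psi> j) D) \<and>
    tw_mult S m al (Tr D L1 L F1) (Tr D K K1 F2)
     = Tr D L1 K1 (tw_mult (GD S m st one D) m (be D) (tw_mult (GD S m st one D) m (be D) F1 (twP S m st one al u D L K)) F2)
       + lin J \<psi> v"
proof -
  define G where "G = GD S m st one D"
  define e where "e = one D"
  note o = oneD[OF D, folded e_def]
  have Gfin: "finite G" and GS: "G \<subseteq> S" unfolding G_def using G_fin[OF D] G_sub[OF D] by auto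
  have GH: "g \<in> G \<longleftrightarrow> H e g" for g unfolding G_def e_def using G_iff[OF D] .
  define a where "a = st (u L1)"
  define x1 where "x1 = u L"
  define y1 where "y1 = st (u K)"
  define b where "b = u K1"
  define p where "p = m x1 y1"
  have aL: "inL e a" and x1R: "inR e x1" and y1L: "inL e y1" and bR: "inR e b"
    unfolding a_def x1_def y1_def b_def e_def using uL[OF D L1] uL[OF D L] uL[OF D K] uL[OF D K1] by auto
  have S: "a\<in>S" "x1\<in>S" "y1\<in>S" "b\<in>S" using aL x1R y1L bR unfolding inL_def inR_def by auto
  have pS: "p \<in> S" unfolding p_def using S by simp
  have prod: "tw_mult S m al (Tr D L1 L F1) (Tr D K K1 F2)
     = lin (G \<times> G) (\<lambda>(g,h). m (phi L1 L g) (phi K K1 h))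
         (\<lambda>(g,h). al (phi L1 L g) (phi K K1 h) * (F1 g * W D L1 L g) * (F2 h * W D K K1 h))"
    unfolding Tr_lin G_def[symmetric]
    by (rule tw_mult_lin[OF finS Gfin Gfin]) (use phi_S[OF D L1 L] phi_S[OF D K K1] G_def in auto)
  show ?thesis
  proof (cases "p \<in> G")
    case True
    have pH: "H e p" using True GH by blast
    have twP: "twP S m st one al u D L K = lin {p} (\<lambda>_. p) (\<lambda>_. al x1 y1)"
      unfolding twP_def lin_def smul_def basis_elt_def using True unfolding G_def p_def x1_def y1_def
      by (rule_tac ext) auto
    have F1l: "F1 = lin G (\<lambda>x. x) F1" and F2l: "F2 = lin G (\<lambda>x. x) F2"
      using carrier_lin[OF D F1] carrier_lin[OF D F2] unfolding G_def by auto
    have c1: "tw_mult G m (be D) F1 (twP S m st one al u D L K)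
        = lin (G \<times> {p}) (\<lambda>(i,j). m i p) (\<lambda>(i,j). be D i p * F1 i * al x1 y1)"
    proof -
      have "tw_mult G m (be D) (lin G (\<lambda>x. x) F1) (lin {p} (\<lambda>_. p) (\<lambda>_. al x1 y1))
          = lin (G \<times> {p}) (\<lambda>(i,j). m i p) (\<lambda>(i,j). be D i p * F1 i * al x1 y1)"
        using True by (subst tw_mult_lin[OF Gfin Gfin]) auto
      then show ?thesis using F1l twP by simp
    qed
    have Gm: "g \<in> G \<Longrightarrow> h \<in> G \<Longrightarrow> m g h \<in> G" for g h using GH H_m o(2) by blast
    have c2: "tw_mult G m (be D) (tw_mult G m (be D) F1 (twP S m st one al u D L K)) F2
       = lin ((G \<times> {p}) \<times> G) (\<lambda>(ij,k). m (m (fst ij) p) k) (\<lambda>(ij,k). be D (m (fst ij) p) k * (be D (fst ij) p * F1 (fst ij) * al x1 y1) * F2 k)"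
    proof -
      have "tw_mult G m (be D) (lin (G \<times> {p}) (\<lambda>(i,j). m i p) (\<lambda>(i,j). be D i p * F1 i * al x1 y1)) (lin G (\<lambda>x. x) F2)
         = lin ((G \<times> {p}) \<times> G) (\<lambda>(ij,k). m ((\<lambda>(i,j). m i p) ij) k) (\<lambda>(ij,k). be D ((\<lambda>(i,j). m i p) ij) k * (\<lambda>(i,j). be D i p * F1 i * al x1 y1) ij * F2 k)"
        by (rule tw_mult_lin[OF Gfin _ Gfin]) (use Gfin True Gm in auto)
      moreover have "lin ((G \<times> {p}) \<times> G) (\<lambda>(ij,k). m ((\<lambda>(i,j). m i p) ij) k) (\<lambda>(ij,k). be D ((\<lambda>(i,j). m i p) ij) k * (\<lambda>(i,j). be D i p * F1 i * al x1 y1) ij * F2 k)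
         = lin ((G \<times> {p}) \<times> G) (\<lambda>(ij,k). m (m (fst ij) p) k) (\<lambda>(ij,k). be D (m (fst ij) p) k * (be D (fst ij) p * F1 (fst ij) * al x1 y1) * F2 k)"
        by (rule lin_cong) auto
      ultimately show ?thesis using c1 F2l by simp
    qed
    define J where "J = (G \<times> {p}) \<times> G"
    have Jfin: "finite J" unfolding J_def using Gfin by simp
    have c3: "Tr D L1 K1 (tw_mult G m (be D) (tw_mult G m (be D) F1 (twP S m st one al u D L K)) F2)
      = lin J (\<lambda>j. phi L1 K1 ((\<lambda>(ij,k). m (m (fst ij) p) k) j))
          (\<lambda>j. (\<lambda>(ij,k). be D (m (fst ij) p) k * (be D (fst ij) p * F1 (fst ij) * al x1 y1) * F2 k) j
             * W D L1 K1 ((\<lambda>(ij,k). m (m (fst ij) p) k) j))"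
      unfolding c2 Tr_lin G_def[symmetric] J_def[symmetric]
      by (rule lin_tr[OF Gfin Jfin]) (use Gm True J_def in auto)
    have bij: "bij_betw (\<lambda>(g,h). ((g,p),h)) (G \<times> G) J"
      unfolding J_def by (rule bij_betw_byWitness[where f'="\<lambda>(ij,k). (fst ij, k)"]) auto
    have c4: "lin (G \<times> G) (\<lambda>(g,h). m (phi L1 L g) (phi K K1 h))
         (\<lambda>(g,h). al (phi L1 L g) (phi K K1 h) * (F1 g * W D L1 L g) * (F2 h * W D K K1 h))
       = Tr D L1 K1 (tw_mult G m (be D) (tw_mult G m (be D) F1 (twP S m st one al u D L K)) F2)"
      unfolding c3 lin_reindex[OF bij]
    proof (rule lin_cong)
      fix j assume j: "j \<in> G \<times> G"
      obtain g h where gh: "j = (g,h)" "g\<in>G" "h\<in>G" using j by auto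
      have gS: "g\<in>S" "h\<in>S" using gh GS by auto
      show "(case j of (g, h) \<Rightarrow> m (phi L1 L g) (phi K K1 h)) =
            phi L1 K1 ((\<lambda>(ij,k). m (m (fst ij) p) k) ((\<lambda>(g,h). ((g,p),h)) j))"
        unfolding gh phi_def a_def[symmetric] x1_def[symmetric] y1_def[symmetric] b_def[symmetric] p_def
        using S gS by (simp add: assoc)
      have ci: "al (m (m a g) x1) (m (m y1 h) b) * (be D a g * be D (m a g) x1) * (be D y1 h * be D (m y1 h) b)
   = al x1 y1 * be D g (m x1 y1) * be D (m g (m x1 y1)) h * (be D a (m (m g (m x1 y1)) h) * be D (m a (m (m g (m x1 y1)) h)) b)"
        by (rule coef_id[OF D aL[unfolded e_def] x1R[unfolded e_def] y1L[unfolded e_def] bR[unfolded e_def]])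
           (use pH gh GH p_def e_def in auto)
      show "(case j of (g, h) \<Rightarrow> al (phi L1 L g) (phi K K1 h) * (F1 g * W D L1 L g) * (F2 h * W D K K1 h)) =
        (\<lambda>(ij, k). be D (m (fst ij) p) k * (be D (fst ij) p * F1 (fst ij) * al x1 y1) * F2 k) ((\<lambda>(g,h). ((g,p),h)) j) *
        W D L1 K1 ((\<lambda>(ij,k). m (m (fst ij) p) k) ((\<lambda>(g,h). ((g,p),h)) j))"
      proof -
        have "al (phi L1 L g) (phi K K1 h) * (F1 g * W D L1 L g) * (F2 h * W D K K1 h)
           = (al (m (m a g) x1) (m (m y1 h) b) * (be D a g * be D (m a g) x1) * (be D y1 h * be D (m y1 h) b)) * F1 g * F2 h"
          unfolding phi_def W_def a_def[symmetric] x1_def[symmetric] y1_def[symmetric] b_def[symmetric] by (simp only: mult_ac)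
        also have "\<dots> = (al x1 y1 * be D g (m x1 y1) * be D (m g (m x1 y1)) h * (be D a (m (m g (m x1 y1)) h) * be D (m a (m (m g (m x1 y1)) h)) b)) * F1 g * F2 h"
          by (simp only: ci)
        also have "\<dots> = be D (m g p) h * (be D g p * F1 g * al x1 y1) * F2 h * W D L1 K1 (m (m g p) h)"
          unfolding W_def a_def[symmetric] b_def[symmetric] p_def by (simp only: mult_ac)
        finally show ?thesis unfolding gh by simp
      qed
    qed
    have l0: "lin ({}::('s\<times>'s) set) (\<lambda>_. p) (\<lambda>_. 0::'r) = 0" unfolding lin_def by (rule ext) (simp only: sum.empty zero_fun_apply)
    have eq: "tw_mult S m al (Tr D L1 L F1) (Tr D K K1 F2)
     = Tr D L1 K1 (tw_mult (GD S m st one D) m (be D) (tw_mult (GD S m st one D) m (be D) F1 (twP S m st one al u D L K)) F2)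
       + lin ({}::('s\<times>'s) set) (\<lambda>_. p) (\<lambda>_. 0::'r)"
      unfolding l0 prod c4[unfolded G_def] G_def by (simp only: add_0_right)
    show ?thesis apply (rule exI[of _ "{}"], rule exI[of _ "\<lambda>_. p"], rule exI[of _ "\<lambda>_. 0::'r"]) using eq by simp
  next
    case False
    have twP: "twP S m st one al u D L K = 0"
      unfolding twP_def using False unfolding G_def p_def x1_def y1_def by simp
    have z: "Tr D L1 K1 (tw_mult G m (be D) (tw_mult G m (be D) F1 (twP S m st one al u D L K)) F2) = 0"
      unfolding twP tw_mult_zero1 tw_mult_zero2 Tr_lin lin_def
      by (rule ext) (simp only: zero_fun_apply mult_zero_right mult_zero_left if_cancel sum.neutral_const)
    have below_pts: "\<forall>j\<in>G \<times> G. (\<lambda>(g,h). m (phi L1 L g) (phi K K1 h)) j \<in> S \<and>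
        below_D S m ((\<lambda>(g,h). m (phi L1 L g) (phi K K1 h)) j) D"
    proof
      fix j assume j: "j \<in> G \<times> G"
      obtain g h where gh: "j = (g,h)" "g\<in>G" "h\<in>G" using j by auto
      have gS: "g\<in>S" "h\<in>S" using gh GS by auto
      define z where "z = m (phi L1 L g) (phi K K1 h)"
      have zS: "z \<in> S" unfolding z_def phi_def a_def[symmetric] x1_def[symmetric] y1_def[symmetric] b_def[symmetric] using S gS by simp
      have aS2: "m a e = a" using aL unfolding inL_def by simp
      have z1: "z = m (m a e) (m g (m x1 (m (m y1 h) b)))" unfolding z_def phi_def aS2
        unfolding a_def[symmetric] x1_def[symmetric] y1_def[symmetric] b_def[symmetric] using S gS by (simp add: assoc)
      have J1: "Jle S m z e" unfolding Jle_def using z1 S gS by blast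
      have J2: "\<not> Jle S m e z"
      proof
        assume J: "Jle S m e z"
        have z2: "z = m (m a g) (m p (m h b))" unfolding z_def phi_def p_def
          unfolding a_def[symmetric] x1_def[symmetric] y1_def[symmetric] b_def[symmetric] using S gS by (simp add: assoc)
        obtain s t where st: "s\<in>S" "t\<in>S" "e = m s (m p t)"
          using Jle_ex[OF J o(2) zS o(3) z2] S gS pS by auto
        have "inL e (m x1 y1) \<and> inR e (m x1 y1)" using stab_H[OF o(2,3,4) x1R y1L st(1,2)] st(3) p_def by simp
        then have "p \<in> G" using GH unfolding H_def p_def by blast
        then show False using False by blast
      qed
      have "below_D S m z D" using below[OF D o(1) o(3) zS J1 J2] .
      then show "(\<lambda>(g,h). m (phi L1 L g) (phi K K1 h)) j \<in> S \<and> below_D S m ((\<lambda>(g,h). m (phi L1 L g) (phi K K1 h)) j) D"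
        using zS unfolding gh z_def by simp
    qed
    have eq: "tw_mult S m al (Tr D L1 L F1) (Tr D K K1 F2)
     = Tr D L1 K1 (tw_mult (GD S m st one D) m (be D) (tw_mult (GD S m st one D) m (be D) F1 (twP S m st one al u D L K)) F2)
       + lin (G \<times> G) (\<lambda>(g,h). m (phi L1 L g) (phi K K1 h))
         (\<lambda>(g,h). al (phi L1 L g) (phi K K1 h) * (F1 g * W D L1 L g) * (F2 h * W D K K1 h))"
      unfolding prod z[unfolded G_def] G_def by (simp only: add_0_left)
    show ?thesis
      apply (rule exI[of _ "G \<times> G"], rule exI[of _ "\<lambda>(g,h). m (phi L1 L g) (phi K K1 h)"],
          rule exI[of _ "\<lambda>(g,h). al (phi L1 L g) (phi K K1 h) * (F1 g * W D L1 L g) * (F2 h * W D K K1 h)"])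
      using Gfin below_pts eq by blast
  qed
qed

end


lemma span_sum': assumes "finite I" "\<And>a. a \<in> A \<Longrightarrow> f a \<in> cell_span I v" shows "(\<Sum>a\<in>A. f a) \<in> cell_span I v"
proof (cases "finite A")
  case True then show ?thesis using span_sum assms by blast
next
  case False then show ?thesis using span_0[OF assms(1)] by simp
qed

lemma lin_sumv: "lin J \<psi> (\<lambda>j. \<Sum>i\<in>I. f i j) = (\<Sum>i\<in>I. lin J \<psi> (f i))"
proof (rule ext)
  fix z
  have "lin J \<psi> (\<lambda>j. \<Sum>i\<in>I. f i j) z = (\<Sum>j\<in>J. \<Sum>i\<in>I. if \<psi> j = z then f i j else 0)"
    unfolding lin_def by (intro sum.cong refl) auto
  also have "\<dots> = (\<Sum>i\<in>I. \<Sum>j\<in>J. if \<psi> j = z then f i j else 0)" by (rule sum.swap)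
  also have "\<dots> = (\<Sum>i\<in>I. lin J \<psi> (f i)) z" unfolding lin_def sum_fun_apply ..
  finally show "lin J \<psi> (\<lambda>j. \<Sum>i\<in>I. f i j) z = (\<Sum>i\<in>I. lin J \<psi> (f i)) z" .
qed

lemma cellular_fin: "cellular B mul st Lam le M C \<Longrightarrow> finite Lam \<and> (\<forall>l\<in>Lam. finite (M l))"
  unfolding cellular_def by (elim conjE) (intro conjI)
lemma cellular_span: "cellular B mul st Lam le M C \<Longrightarrow> alg_carrier B \<subseteq> cell_span (cell_idx Lam M) (\<lambda>(lam, s, t). C lam s t)"
  unfolding cellular_def by (elim conjE)
lemma cellular_carrier: "cellular B mul st Lam le M C \<Longrightarrow> l \<in> Lam \<Longrightarrow> s \<in> M l \<Longrightarrow> t \<in> M l \<Longrightarrow> C l s t \<in> alg_carrier B"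
  unfolding cellular_def cell_idx_def by (elim conjE) blast

context setting begin

lemma cellG: "D \<in> Dclasses S m \<Longrightarrow> cellular (GD S m st one D) (tw_mult (GD S m st one D) m (be D)) (alg_star st)
                 (LamD D) (leD D) (MD D) (CD D)"
  using cell_G by (rule bspec)

lemma Tr_smul_add: "Tr D L K (smul r F + g) = smul r (Tr D L K F) + Tr D L K g"
proof -
  have "Tr D L K (smul r F + g) = lin (GD S m st one D) (phi L K) (\<lambda>x. r * (F x * W D L K x) + g x * W D L K x)"
    unfolding Tr_lin smul_def by (simp add: algebra_simps)
  also have "\<dots> = smul r (Tr D L K F) + Tr D L K g"
    unfolding lin_add lin_smul Tr_lin ..
  finally show ?thesis .
qed

lemma Tr_sum: "Tr D L K (\<Sum>i\<in>I. smul (c i) (F i)) = (\<Sum>i\<in>I. smul (c i) (Tr D L K (F i)))"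
proof -
  have "Tr D L K (\<Sum>i\<in>I. smul (c i) (F i)) = lin (GD S m st one D) (phi L K) (\<lambda>x. \<Sum>i\<in>I. c i * (F i x * W D L K x))"
    unfolding Tr_lin smul_def sum_fun_apply by (simp add: sum_distrib_right mult.assoc)
  also have "\<dots> = (\<Sum>i\<in>I. smul (c i) (Tr D L K (F i)))"
    unfolding lin_sumv lin_smul Tr_lin ..
  finally show ?thesis .
qed

definition Ib where "Ib D lam = {(mu, a, w). mu \<in> bigLam S m LamD \<and> bigle S m leD mu (D, lam) \<and> mu \<noteq> (D, lam)
    \<and> a \<in> bigM S m MD mu \<and> w \<in> bigM S m MD mu}"

lemma lowerB_def: "lower_ideal (bigLam S m LamD) (bigle S m leD) (bigM S m MD) (bigC S m st one be CD u) (D, lam)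
   = cell_span (Ib D lam) (\<lambda>(mu, a, w). bigC S m st one be CD u mu a w)"
  unfolding lower_ideal_def Ib_def ..

lemma Dclasses_fin: "finite (Dclasses S m)" unfolding Dclasses_def by (rule finite_imageI[OF finS])

lemma cellD: "D \<in> Dclasses S m \<Longrightarrow> finite (LamD D) \<and> (\<forall>l\<in>LamD D. finite (MD D l))"
  by (rule cellular_fin[OF cellG])

lemma Ib_fin: "finite (Ib D lam)"
proof -
  have "Ib D lam \<subseteq> Sigma (bigLam S m LamD) (\<lambda>mu. bigM S m MD mu \<times> bigM S m MD mu)"
    unfolding Ib_def by auto
  moreover have "finite (bigLam S m LamD)" unfolding bigLam_def using Dclasses_fin cellD by auto
  moreover have "mu \<in> bigLam S m LamD \<Longrightarrow> finite (bigM S m MD mu)" for mu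
  proof -
    assume mu: "mu \<in> bigLam S m LamD"
    then have D: "fst mu \<in> Dclasses S m" "snd mu \<in> LamD (fst mu)" unfolding bigLam_def by auto
    have "finite (Lclasses_in S m (fst mu))" unfolding Lclasses_in_def
      using Dclasses_sub[OF D(1)] finS finite_subset by blast
    then show ?thesis unfolding bigM_def using cellD[OF D(1)] D(2) by simp
  qed
  ultimately show ?thesis by (meson finite_SigmaI finite_cartesian_product finite_subset)
qed

lemma span_below:
  assumes D: "D \<in> Dclasses S m" and y: "y \<in> S" "below_D S m y D"
  shows "basis_elt y \<in> cell_span (Ib D lam) (\<lambda>(mu, a, w). bigC S m st one be CD u mu a w)"
proof -
  define D' where "D' = Dclass S m y"
  have D': "D' \<in> Dclasses S m" unfolding D'_def Dclasses_def using y by blast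
  have yD': "y \<in> D'" unfolding D'_def using Dclass_self y by blast
  have less: "Dless S m D' D" using y unfolding below_D_def D'_def by blast
  have neq: "D' \<noteq> D" using less Dless_irrefl D by blast
  obtain L1 K1 g0 where L1: "L1 \<in> Lclasses_in S m D'" and K1: "K1 \<in> Lclasses_in S m D'"
    and g0: "g0 \<in> GD S m st one D'" and yeq: "y = phi L1 K1 g0"
    using decomp_D[OF D' yD'] by blast
  obtain w' where w': "1 = W D' L1 K1 g0 * w'" using W_unit[OF D' L1 K1 g0] unfolding dvd_def by blast
  define F where "F = lin {g0} (\<lambda>_. g0) (\<lambda>_. w')"
  have Fc: "F \<in> alg_carrier (GD S m st one D')"
    unfolding F_def alg_carrier_def lin_def using g0 by auto
  have TrF: "Tr D' L1 K1 F = basis_elt y"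
  proof -
    have "Tr D' L1 K1 F = lin {g0} (\<lambda>_. phi L1 K1 g0) (\<lambda>_. w' * W D' L1 K1 g0)"
      unfolding Tr_lin F_def by (rule lin_tr[OF G_fin[OF D']]) (use g0 in auto)
    also have "\<dots> = basis_elt y" unfolding lin_def basis_elt_def yeq using w'
      by (rule_tac ext) (auto simp: mult.commute)
    finally show ?thesis .
  qed
  have "alg_carrier (GD S m st one D') \<subseteq> cell_span (cell_idx (LamD D') (MD D')) (\<lambda>(l, s, t). CD D' l s t)"
    using cellular_span[OF cellG[OF D']] .
  then obtain c where c: "F = (\<Sum>i\<in>cell_idx (LamD D') (MD D'). smul (c i) ((\<lambda>(l, s, t). CD D' l s t) i))"
    using Fc unfolding cell_span_def by blast
  have "basis_elt y = (\<Sum>i\<in>cell_idx (LamD D') (MD D'). smul (c i) (Tr D' L1 K1 ((\<lambda>(l, s, t). CD D' l s t) i)))"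
    using TrF c Tr_sum by metis
  also have "\<dots> \<in> cell_span (Ib D lam) (\<lambda>(mu, a, w). bigC S m st one be CD u mu a w)"
  proof (rule span_sum'[OF Ib_fin])
    fix i assume i: "i \<in> cell_idx (LamD D') (MD D')"
    obtain l a w where i': "i = (l, a, w)" "l \<in> LamD D'" "a \<in> MD D' l" "w \<in> MD D' l"
      using i unfolding cell_idx_def by auto
    have idx: "((D', l), (L1, a), (K1, w)) \<in> Ib D lam"
      unfolding Ib_def bigLam_def bigle_def bigM_def using D' i' less neq L1 K1 by auto
    have "Tr D' L1 K1 (CD D' l a w) = bigC S m st one be CD u (D', l) (L1, a) (K1, w)"
      unfolding bigC_Tr by simp
    then have "Tr D' L1 K1 ((\<lambda>(l, s, t). CD D' l s t) i) \<in> cell_span (Ib D lam) (\<lambda>(mu, a, w). bigC S m st one be CD u mu a w)"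
      using span_gen[OF Ib_fin idx, of "\<lambda>(mu, a, w). bigC S m st one be CD u mu a w"] i' by simp
    then show "smul (c i) (Tr D' L1 K1 ((\<lambda>(l, s, t). CD D' l s t) i)) \<in> cell_span (Ib D lam) (\<lambda>(mu, a, w). bigC S m st one be CD u mu a w)"
      by (rule span_smul)
  qed
  finally show ?thesis .
qed

lemma lin_below:
  assumes D: "D \<in> Dclasses S m" and J: "finite J" and pts: "\<forall>j\<in>J. \<psi> j \<in> S \<and> below_D S m (\<psi> j) D"
  shows "lin J \<psi> v \<in> cell_span (Ib D lam) (\<lambda>(mu, a, w). bigC S m st one be CD u mu a w)"
  unfolding lin_sum by (rule span_sum[OF Ib_fin J], rule span_smul, rule span_below[OF D]) (use pts in auto)

lemma Tr_lower:
  assumes D: "D \<in> Dclasses S m" and L1: "L1 \<in> Lclasses_in S m D" and K1: "K1 \<in> Lclasses_in S m D"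
    and g: "g \<in> lower_ideal (LamD D) (leD D) (MD D) (CD D) lam"
  shows "Tr D L1 K1 g \<in> cell_span (Ib D lam) (\<lambda>(mu, a, w). bigC S m st one be CD u mu a w)"
proof -
  let ?I = "{(mu, u, w). mu \<in> LamD D \<and> leD D mu lam \<and> mu \<noteq> lam \<and> u \<in> MD D mu \<and> w \<in> MD D mu}"
  obtain c where c: "g = (\<Sum>i\<in>?I. smul (c i) ((\<lambda>(mu, u, w). CD D mu u w) i))"
    using g unfolding lower_ideal_def cell_span_def by blast
  have "Tr D L1 K1 g = (\<Sum>i\<in>?I. smul (c i) (Tr D L1 K1 ((\<lambda>(mu, u, w). CD D mu u w) i)))"
    unfolding c by (rule Tr_sum)
  also have "\<dots> \<in> cell_span (Ib D lam) (\<lambda>(mu, a, w). bigC S m st one be CD u mu a w)"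
  proof (rule span_sum'[OF Ib_fin])
    fix i assume i: "i \<in> ?I"
    obtain l a w where i': "i = (l, a, w)" "l \<in> LamD D" "leD D l lam" "l \<noteq> lam" "a \<in> MD D l" "w \<in> MD D l"
      using i by auto
    have idx: "((D, l), (L1, a), (K1, w)) \<in> Ib D lam"
      unfolding Ib_def bigLam_def bigle_def bigM_def using D i' L1 K1 by auto
    have "Tr D L1 K1 (CD D l a w) = bigC S m st one be CD u (D, l) (L1, a) (K1, w)"
      unfolding bigC_Tr by simp
    then have "Tr D L1 K1 ((\<lambda>(mu, u, w). CD D mu u w) i) \<in> cell_span (Ib D lam) (\<lambda>(mu, a, w). bigC S m st one be CD u mu a w)"
      using span_gen[OF Ib_fin idx, of "\<lambda>(mu, a, w). bigC S m st one be CD u mu a w"] i' by simp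
    then show "smul (c i) (Tr D L1 K1 ((\<lambda>(mu, u, w). CD D mu u w) i)) \<in> cell_span (Ib D lam) (\<lambda>(mu, a, w). bigC S m st one be CD u mu a w)"
      by (rule span_smul)
  qed
  finally show ?thesis .
qed

end

context setting begin

lemma tw_mult_carrier:
  assumes D: "D \<in> Dclasses S m"
  shows "tw_mult (GD S m st one D) m (be D) f g \<in> alg_carrier (GD S m st one D)"
proof -
  have cl: "x \<in> GD S m st one D \<Longrightarrow> y \<in> GD S m st one D \<Longrightarrow> m x y \<in> GD S m st one D" for x y
    using G_iff[OF D] H_m oneD(2)[OF D] by blast
  show ?thesis unfolding alg_carrier_def tw_mult_def
  proof (intro CollectI allI impI)
    fix z assume z: "z \<notin> GD S m st one D"
    show "(\<Sum>x\<in>GD S m st one D. \<Sum>y\<in>GD S m st one D. if m x y = z then be D x y * f x * g y else 0) = 0"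
      by (intro sum.neutral ballI) (use cl z in auto)
  qed
qed

lemma unit_cancel: "(w::'r) dvd 1 \<Longrightarrow> x * w = y * w \<Longrightarrow> x = y"
proof -
  assume "w dvd 1" "x * w = y * w"
  then obtain w' where w': "1 = w * w'" unfolding dvd_def by blast
  have "x = x * w * w'" using w' by (simp add: mult.assoc)
  also have "\<dots> = y * w * w'" using \<open>x * w = y * w\<close> by simp
  also have "\<dots> = y" using w' by (simp add: mult.assoc)
  finally show ?thesis .
qed

lemma proj:
  assumes D: "D \<in> Dclasses S m" and lam: "lam \<in> LamD D"
    and L1: "L1 \<in> Lclasses_in S m D" and K1: "K1 \<in> Lclasses_in S m D"
    and X: "X \<in> alg_carrier (GD S m st one D)" and Y: "Y \<in> alg_carrier (GD S m st one D)"
    and J: "finite J" and pts: "\<forall>j\<in>J. \<psi> j \<in> S \<and> below_D S m (\<psi> j) D"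
    and gb: "gb \<in> cell_span (Ib D lam) (\<lambda>(mu, a, w). bigC S m st one be CD u mu a w)"
    and eq: "Tr D L1 K1 X + lin J \<psi> v = smul r (Tr D L1 K1 Y) + gb"
  shows "\<exists>g\<in>lower_ideal (LamD D) (leD D) (MD D) (CD D) lam. X = smul r Y + g"
proof -
  let ?I = "{(mu, u, w). mu \<in> LamD D \<and> leD D mu lam \<and> mu \<noteq> lam \<and> u \<in> MD D mu \<and> w \<in> MD D mu}"
  let ?B = "\<lambda>(mu, a, w). bigC S m st one be CD u mu a w"
  obtain c where c: "gb = (\<Sum>i\<in>Ib D lam. smul (c i) (?B i))" using gb unfolding cell_span_def by blast
  define jj where "jj = (\<lambda>k::'l\<times>'m\<times>'m. ((D, fst k), (L1, fst (snd k)), (K1, snd (snd k))))"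
  define c' where "c' = (\<lambda>k. c (jj k))"
  define g where "g = (\<Sum>k\<in>?I. smul (c' k) ((\<lambda>(mu, u, w). CD D mu u w) k))"
  have gl: "g \<in> lower_ideal (LamD D) (leD D) (MD D) (CD D) lam"
    unfolding lower_ideal_def cell_span_def g_def by blast
  have jjI: "jj ` ?I \<subseteq> Ib D lam"
    unfolding jj_def Ib_def bigLam_def bigle_def bigM_def using D L1 K1 by auto
  have jjinj: "inj_on jj ?I" unfolding jj_def by (rule inj_onI) auto
  have CDc: "k \<in> ?I \<Longrightarrow> (\<lambda>(mu, u, w). CD D mu u w) k \<in> alg_carrier (GD S m st one D)" for k
    using cellular_carrier[OF cellG[OF D]] by auto
  have "X z = (smul r Y + g) z" for z
  proof (cases "z \<in> GD S m st one D")
    case False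
    have "X z = 0" "Y z = 0" using X Y False unfolding alg_carrier_def by auto
    moreover have "g z = 0" unfolding g_def sum_fun_apply smul_def
      using CDc False unfolding alg_carrier_def by (intro sum.neutral ballI) auto
    ultimately show ?thesis by (simp add: smul_def)
  next
    case True
    define y where "y = phi L1 K1 z"
    have yp: "y \<in> S" "y \<in> D" "Lclass S m y = K1" "Lclass S m (st y) = L1"
      unfolding y_def by (fact phi_props[OF D L1 K1 True])+
    have Wu: "W D L1 K1 z dvd 1" using W_unit[OF D L1 K1 True] .
    have lin0: "lin J \<psi> v y = 0"
    proof (rule ccontr)
      assume "lin J \<psi> v y \<noteq> 0"
      then obtain j where j: "j \<in> J" "\<psi> j = y" using lin_nz[of J \<psi> v y] by blast
      have "below_D S m (\<psi> j) D" using bspec[OF pts j(1)] by (rule conjunct2)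
      then have "below_D S m y D" unfolding j(2) .
      then have "Dless S m (Dclass S m y) D" unfolding below_D_def .
      moreover have "Dclass S m y = D" using Dclasses_mem[OF D yp(2)] by (rule sym)
      ultimately have "Dless S m D D" by simp
      then show False using Dless_irrefl D by blast
    qed
    have gbz: "gb y = (\<Sum>k\<in>?I. c' k * (CD D (fst k) (fst (snd k)) (snd (snd k)) z * W D L1 K1 z))"
    proof -
      let ?f = "\<lambda>i. c i * ?B i y"
      have "gb y = (\<Sum>i\<in>Ib D lam. ?f i)" unfolding c sum_fun_apply smul_def by simp
      also have "\<dots> = (\<Sum>i\<in>jj ` ?I. ?f i)"
      proof (rule sum.mono_neutral_right[OF Ib_fin jjI], rule ballI)
        fix i assume i: "i \<in> Ib D lam - jj ` ?I"
        obtain D2 l L2 a K2 w where i': "i = ((D2, l), (L2, a), (K2, w))" by (cases i) auto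
        have m: "D2 \<in> Dclasses S m" "l \<in> LamD D2" "bigle S m leD (D2, l) (D, lam)" "(D2, l) \<noteq> (D, lam)"
          "L2 \<in> Lclasses_in S m D2" "a \<in> MD D2 l" "K2 \<in> Lclasses_in S m D2" "w \<in> MD D2 l"
          using i unfolding i' Ib_def bigLam_def bigM_def by auto
        show "?f i = 0"
        proof (rule ccontr)
          assume nz: "?f i \<noteq> 0"
          have "?B i y \<noteq> 0" using nz by (cases "?B i y = 0") simp_all
          then have "bigC S m st one be CD u (D2, l) (L2, a) (K2, w) y \<noteq> 0" unfolding i' by simp
          then have "Tr D2 L2 K2 (CD D2 l a w) y \<noteq> 0" unfolding bigC_Tr fst_conv snd_conv .
          then have "lin (GD S m st one D2) (phi L2 K2) (\<lambda>g. CD D2 l a w g * W D2 L2 K2 g) y \<noteq> 0" unfolding Tr_lin .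
          then obtain g2 where g2: "g2 \<in> GD S m st one D2" "phi L2 K2 g2 = y"
            using lin_nz[of "GD S m st one D2" "phi L2 K2" "\<lambda>g. CD D2 l a w g * W D2 L2 K2 g" y] by blast
          note pp = phi_props[OF m(1,5,7) g2(1), unfolded g2(2)]
          have "D2 = Dclass S m y" using Dclasses_mem[OF m(1) pp(2)] .
          also have "\<dots> = D" using Dclasses_mem[OF D yp(2)] by (rule sym)
          finally have "D2 = D" .
          moreover have "K2 = K1" using pp(3) yp(3) by simp
          moreover have "L2 = L1" using pp(4) yp(4) by simp
          ultimately have "i = jj (l, a, w)" unfolding i' jj_def by simp
          moreover have "(l, a, w) \<in> ?I"
          proof -
            have "\<not> Dless S m D D" using Dless_irrefl[OF D] .
            then have "leD D l lam" "l \<noteq> lam" using m(3,4) \<open>D2 = D\<close> unfolding bigle_def by auto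
            then show ?thesis using m(2,6,8) \<open>D2 = D\<close> by simp
          qed
          ultimately show False using i by blast
        qed
      qed
      also have "\<dots> = (\<Sum>k\<in>?I. ?f (jj k))" by (simp only: sum.reindex[OF jjinj] comp_def)
      also have "\<dots> = (\<Sum>k\<in>?I. c' k * (CD D (fst k) (fst (snd k)) (snd (snd k)) z * W D L1 K1 z))"
      proof (rule sum.cong[OF refl])
        fix k assume k: "k \<in> ?I"
        have "?B (jj k) y = Tr D L1 K1 (CD D (fst k) (fst (snd k)) (snd (snd k))) (phi L1 K1 z)"
          unfolding jj_def bigC_Tr y_def by simp
        also have "\<dots> = CD D (fst k) (fst (snd k)) (snd (snd k)) z * W D L1 K1 z"
          by (rule Tr_eval[OF D L1 K1 True])
        finally show "?f (jj k) = c' k * (CD D (fst k) (fst (snd k)) (snd (snd k)) z * W D L1 K1 z)"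
          unfolding c'_def by simp
      qed
      finally show ?thesis .
    qed
    have gz: "g z = (\<Sum>k\<in>?I. c' k * CD D (fst k) (fst (snd k)) (snd (snd k)) z)"
      unfolding g_def sum_fun_apply smul_def by (intro sum.cong refl) auto
    have "(Tr D L1 K1 X + lin J \<psi> v) y = (smul r (Tr D L1 K1 Y) + gb) y" using eq by simp
    then have "X z * W D L1 K1 z = r * (Y z * W D L1 K1 z) + gb y"
      using lin0 unfolding plus_fun_apply smul_def y_def Tr_eval[OF D L1 K1 True] by simp
    also have "\<dots> = (r * Y z + g z) * W D L1 K1 z"
      unfolding gbz gz distrib_right sum_distrib_right by (simp add: mult.assoc)
    finally have "X z = r * Y z + g z" using unit_cancel[OF Wu] by blast
    then show ?thesis by (simp add: smul_def)
  qed
  then have Xeq: "X = smul r Y + g" by (rule ext)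
  show ?thesis by (rule bexI[where x=g and P="\<lambda>g. X = smul r Y + g", OF Xeq gl])
qed

end

context setting begin

lemma main:
  assumes D: "D \<in> Dclasses S m" and lam: "lam \<in> LamD D"
    and L: "L \<in> Lclasses_in S m D" and s: "s \<in> MD D lam"
    and K: "K \<in> Lclasses_in S m D" and t: "t \<in> MD D lam"
  shows "cell_form (tw_mult S m al) (bigLam S m LamD) (bigle S m leD) (bigM S m MD)
                (bigC S m st one be CD u) (D, lam) (L, s) (K, t)
    = cell_form_a (tw_mult (GD S m st one D) m (be D)) (LamD D) (leD D) (MD D) (CD D)
                lam (twP S m st one al u D L K) s t"
proof -
  let ?G = "GD S m st one D"
  let ?P = "twP S m st one al u D L K"
  let ?BL = "lower_ideal (bigLam S m LamD) (bigle S m leD) (bigM S m MD) (bigC S m st one be CD u) (D, lam)"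
  let ?GL = "lower_ideal (LamD D) (leD D) (MD D) (CD D) lam"
  have carr: "s1 \<in> MD D lam \<Longrightarrow> t1 \<in> MD D lam \<Longrightarrow> CD D lam s1 t1 \<in> alg_carrier ?G" for s1 t1
    using cellular_carrier[OF cellG[OF D] lam] by blast
  have bM: "bigM S m MD (D, lam) = Lclasses_in S m D \<times> MD D lam" unfolding bigM_def by simp
  have bT: "bigC S m st one be CD u (D, lam) (L1, s1) (K1, t1) = Tr D L1 K1 (CD D lam s1 t1)" for L1 s1 K1 t1
    unfolding bigC_Tr by simp
  have equiv: "(\<forall>s'\<in>bigM S m MD (D, lam). \<forall>t'\<in>bigM S m MD (D, lam). \<exists>g\<in>?BL.
        tw_mult S m al (bigC S m st one be CD u (D, lam) s' (L, s)) (bigC S m st one be CD u (D, lam) (K, t) t')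
          = smul r (bigC S m st one be CD u (D, lam) s' t') + g)
     \<longleftrightarrow> (\<forall>s'\<in>MD D lam. \<forall>t'\<in>MD D lam. \<exists>g\<in>?GL.
        tw_mult ?G m (be D) (tw_mult ?G m (be D) (CD D lam s' s) ?P) (CD D lam t t')
          = smul r (CD D lam s' t') + g)" (is "?PL \<longleftrightarrow> ?PR") for r
  proof
    assume PR: ?PR
    show ?PL
    proof (intro ballI)
      fix s' t' assume s': "s' \<in> bigM S m MD (D, lam)" and t': "t' \<in> bigM S m MD (D, lam)"
      obtain L1 s1 where s'': "s' = (L1, s1)" "L1 \<in> Lclasses_in S m D" "s1 \<in> MD D lam" using s' bM by auto
      obtain K1 t1 where t'': "t' = (K1, t1)" "K1 \<in> Lclasses_in S m D" "t1 \<in> MD D lam" using t' bM by auto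
      from bspec[OF bspec[OF PR s''(3)] t''(3)] obtain gG where gG: "gG \<in> ?GL" "tw_mult ?G m (be D) (tw_mult ?G m (be D) (CD D lam s1 s) ?P) (CD D lam t t1)
          = smul r (CD D lam s1 t1) + gG" ..
      obtain J :: "('s \<times> 's) set" and \<psi> v where Jp: "finite J" "\<forall>j\<in>J. \<psi> j \<in> S \<and> below_D S m (\<psi> j) D"
        "tw_mult S m al (Tr D L1 L (CD D lam s1 s)) (Tr D K K1 (CD D lam t t1))
         = Tr D L1 K1 (tw_mult ?G m (be D) (tw_mult ?G m (be D) (CD D lam s1 s) ?P) (CD D lam t t1)) + lin J \<psi> v"
        using prod_formula[OF D s''(2) L K t''(2) carr[OF s''(3) s] carr[OF t t''(3)]] by blast
      have mem: "Tr D L1 K1 gG + lin J \<psi> v \<in> ?BL"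
        unfolding lowerB_def using span_add Tr_lower[OF D s''(2) t''(2) gG(1)] lin_below[OF D Jp(1,2)] by blast
      have "tw_mult S m al (bigC S m st one be CD u (D, lam) s' (L, s)) (bigC S m st one be CD u (D, lam) (K, t) t')
          = smul r (bigC S m st one be CD u (D, lam) s' t') + (Tr D L1 K1 gG + lin J \<psi> v)"
        unfolding s''(1) t''(1) bT Jp(3) gG(2) Tr_smul_add by (simp add: add.assoc)
      then show "\<exists>g\<in>?BL. tw_mult S m al (bigC S m st one be CD u (D, lam) s' (L, s)) (bigC S m st one be CD u (D, lam) (K, t) t')
          = smul r (bigC S m st one be CD u (D, lam) s' t') + g" using mem by blast
    qed
  next
    assume PL: ?PL
    show ?PR
    proof (intro ballI)
      fix s1 t1 assume s1: "s1 \<in> MD D lam" and t1: "t1 \<in> MD D lam"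
      have "(L, s1) \<in> bigM S m MD (D, lam)" "(K, t1) \<in> bigM S m MD (D, lam)" using bM L K s1 t1 by auto
      from bspec[OF bspec[OF PL this(1)] this(2)] obtain gb where gb: "gb \<in> ?BL"
        "tw_mult S m al (bigC S m st one be CD u (D, lam) (L, s1) (L, s)) (bigC S m st one be CD u (D, lam) (K, t) (K, t1))
          = smul r (bigC S m st one be CD u (D, lam) (L, s1) (K, t1)) + gb" ..
      obtain J :: "('s \<times> 's) set" and \<psi> v where Jp: "finite J" "\<forall>j\<in>J. \<psi> j \<in> S \<and> below_D S m (\<psi> j) D"
        "tw_mult S m al (Tr D L L (CD D lam s1 s)) (Tr D K K (CD D lam t t1))
         = Tr D L K (tw_mult ?G m (be D) (tw_mult ?G m (be D) (CD D lam s1 s) ?P) (CD D lam t t1)) + lin J \<psi> v"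
        using prod_formula[OF D L L K K carr[OF s1 s] carr[OF t t1]] by blast
      have eq: "Tr D L K (tw_mult ?G m (be D) (tw_mult ?G m (be D) (CD D lam s1 s) ?P) (CD D lam t t1)) + lin J \<psi> v
          = smul r (Tr D L K (CD D lam s1 t1)) + gb"
        using gb(2) unfolding bT Jp(3) .
      show "\<exists>g\<in>?GL. tw_mult ?G m (be D) (tw_mult ?G m (be D) (CD D lam s1 s) ?P) (CD D lam t t1)
          = smul r (CD D lam s1 t1) + g"
        by (rule proj[OF D lam L K tw_mult_carrier[OF D] carr[OF s1 t1] Jp(1,2) gb(1)[unfolded lowerB_def] eq])
    qed
  qed
  show ?thesis unfolding cell_form_def cell_form_a_def by (simp only: equiv)
qed

end

theorem lemma13:
  fixes S :: "'s set" and m :: "'s \<Rightarrow> 's \<Rightarrow> 's" and st :: "'s \<Rightarrow> 's"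
    and al :: "'s \<Rightarrow> 's \<Rightarrow> 'r::comm_ring_1"
    and one :: "'s set \<Rightarrow> 's"
    and be :: "'s set \<Rightarrow> 's \<Rightarrow> 's \<Rightarrow> 'r"
    and LamD :: "'s set \<Rightarrow> 'l set" and leD :: "'s set \<Rightarrow> 'l \<Rightarrow> 'l \<Rightarrow> bool"
    and MD :: "'s set \<Rightarrow> 'l \<Rightarrow> 'm set"
    and CD :: "'s set \<Rightarrow> 'l \<Rightarrow> 'm \<Rightarrow> 'm \<Rightarrow> ('s \<Rightarrow> 'r)"
    and u :: "'s set \<Rightarrow> 's"
  assumes finS: "finite S"
    and sg: "semigroup_on S m"
    and inv: "anti_involution_on S m st"
    and tw: "twisting S m al"
    and al_sym: "\<forall>x\<in>S. \<forall>y\<in>S. al x y = al (st y) (st x)"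
    and one_D: "\<forall>D\<in>Dclasses S m. one D \<in> D \<and> m (one D) (one D) = one D \<and> st (one D) = one D"
    and be_unit: "\<forall>D\<in>Dclasses S m. \<forall>x y. inLL S m st one D x y \<longrightarrow> be D x y dvd 1"
    and be_cocycle: "\<forall>D\<in>Dclasses S m. \<forall>x\<in>S. \<forall>y\<in>S. \<forall>z\<in>S.
        inLL S m st one D x y \<and> inLL S m st one D (m x y) z \<and>
        inLL S m st one D x (m y z) \<and> inLL S m st one D y z \<longrightarrow>
        be D x y * be D (m x y) z = be D x (m y z) * be D y z"
    and be_al: "\<forall>D\<in>Dclasses S m. \<forall>x\<in>S. \<forall>y\<in>S. \<forall>z\<in>S.
        inLL S m st one D (m x y) z \<and> inLL S m st one D y z \<longrightarrow>
        al x y * be D (m x y) z = al x (m y z) * be D y z"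
    and be_sym: "\<forall>D\<in>Dclasses S m. \<forall>x\<in>S. \<forall>y\<in>S.
        inLL S m st one D x y \<and> inLL S m st one D (st y) (st x) \<longrightarrow>
        be D x y = be D (st y) (st x)"
    and cell_G: "\<forall>D\<in>Dclasses S m.
        cellular (GD S m st one D) (tw_mult (GD S m st one D) m (be D)) (alg_star st)
                 (LamD D) (leD D) (MD D) (CD D)"
    and u_L: "\<forall>D\<in>Dclasses S m. \<forall>L\<in>Lclasses_in S m D. u L \<in> L \<and> Rrel S m (u L) (one D)"
  shows "\<forall>D\<in>Dclasses S m. \<forall>lam\<in>LamD D.
           \<forall>L\<in>Lclasses_in S m D. \<forall>s\<in>MD D lam. \<forall>K\<in>Lclasses_in S m D. \<forall>t\<in>MD D lam.
      cell_form (tw_mult S m al) (bigLam S m LamD) (bigle S m leD) (bigM S m MD)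
                (bigC S m st one be CD u) (D, lam) (L, s) (K, t)
    = cell_form_a (tw_mult (GD S m st one D) m (be D)) (LamD D) (leD D) (MD D) (CD D)
                lam (twP S m st one al u D L K) s t"
proof -
  interpret setting S m st al one be LamD leD MD CD u
    by (unfold_locales; fact assms)
  show ?thesis by (intro ballI, rule main) assumption+
qed


end
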